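(* Let $\mathbf X$ be a stationary $\beta$-mixing process on $[0,1]^{\mathbb N}$ with distribution $\mu$ and $\beta$-mixing coefficients $\boldsymbol\beta$ such that $\|\boldsymbol\beta\|<\infty$. Then for each $m\in\mathbb N$, \[\lim_{t\to\infty}\widehat\beta_t(\mathbf X,m)=\beta(m)\quad\mu\text{-a.s.},\qquad\text{and}\qquad\lim_{t\to\infty}\widetilde\theta_t(\mathbf X)=\|\boldsymbol\beta\|\quad\mu\text{-a.s.}\]
   Context: $X_t$ is the $t$-th coordinate. $\beta(\mathfrak U,\mathfrak V):=\sup_{W\in\mathfrak U\otimes\mathfrak V}|\mu_\otimes(W)-(\mu_{\mathfrak U}\times\mu_{\mathfrak V})(W)|$ ($\mu_\otimes$ pushforward of $\mu$ under $\omega\mapsto(\omega,\omega)$, $\mu_{\mathfrak U},\mu_{\mathfrak V}$ restrictions); $\beta(m):=\sup_j\beta(\sigma(X_1,\dots,X_j),\sigma(X_t:t\ge j+m))$; $\|\boldsymbol\beta\|:=\sum_m\beta(m)$; $\beta$-mixing means $\beta(m)\to0$. Dyadic cubes: $I_{\ell,i}=[i2^{-\ell},(i+1)2^{-\ell})$, $i=0,\dots,2^\ell-1$ (last interval closed); $\Delta_{k,\ell}$ the set of cubes $I_{\ell,i_1}\times\cdots\times I_{\ell,i_k}$. Empirical estimator: for $n>m$, $j\in\{1,\dots,n-m\}$, $j':=n-m-j+1$, $\mu_t(\mathbf X,B):=\frac1t\sum_{i=0}^{t-1}\mathbf 1\{(X_{ik+1},\dots,X_{(i+1)k})\in B\}$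 for $B\subseteq[0,1]^k$, $\gamma_{t,n}^{m,j}(\mathbf X,A,B):=\frac1t\sum_{i=0}^{t-1}\mathbf 1\{(X_{in+1},\dots,X_{in+j})\in A\}\mathbf 1\{(X_{in+j+m},\dots,X_{(i+1)n})\in B\}$, $\widehat\beta_{t,n}^{\ell}(\mathbf X,m):=\max_{j}\frac12\sum_{A\in\Delta_{j,\ell}}\sum_{B\in\Delta_{j',\ell}}|\gamma_{t,n}^{m,j}(\mathbf X,A,B)-\mu_t(\mathbf X,A)\mu_t(\mathbf X,B)|$. Parameters: $(\ell_t),(n_t)$ non-decreasing unbounded positive integer sequences; $(M_t)$ increasing positive integers with $n_t>M_t$ (and $n_t>m$); $(\delta_t)$ positive with $\sum_t\delta_t<\infty$; $(\epsilon_t)$ positive with $\epsilon_t\to0$. With $\widetilde C_{m,\ell,n}:=m\cdot2^{2^{2n\ell+1}+2^{m\ell+1}+2}$, let $\widetilde\tau_t:=\lceil\widetilde C_{m,\ell_t,n_t}/(m\epsilon_t^2\delta_t)\rceil$, $\widetilde\kappa_t:=\lceil\widetilde C_{M_t,\ell_t,n_t}/(\epsilon_t^2\delta_t)\rceil$, $\widehat\beta_t(\mathbf X,m):=\widehat\beta_{\widetilde\tau_t,n_t}^{\ell_t}(\mathbf X,m)$ and $\widetilde\theta_t(\mathbf X):=\sum_{m=1}^{M_t}\widehat\beta_{\widetilde\kappa_t,n_t}^{\ell_t}(\mathbf X,m)$. *)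

theory Defs
  imports "HOL-Probability.Probability"
begin

text \<open>Conventions: the process is the coordinate process on the sample space of
  functions omega :: nat => real, with values in [0,1]; the paper's X_t (t >= 1)
  is the coordinate omega (t - 1).\<close>

definition seq_space :: "(nat \<Rightarrow> real) measure" where
  "seq_space = PiM UNIV (\<lambda>_. restrict_space borel {0..1::real})"

text \<open>sigma(X_t : t in I), with I a set of 0-based coordinate indices\<close>
definition gen_sa :: "(nat \<Rightarrow> real) measure \<Rightarrow> nat set \<Rightarrow> (nat \<Rightarrow> real) set set" where
  "gen_sa \<mu> I = sigma_sets (space \<mu>)
      (\<Union>t\<in>I. {(\<lambda>\<omega>. \<omega> t) -` A \<inter> space \<mu> | A. A \<in> sets borel})"

definition restr_meas :: "'a measure \<Rightarrow> 'a set set \<Rightarrow> 'a measure" where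
  "restr_meas \<mu> U = measure_of (space \<mu>) U (emeasure \<mu>)"

definition beta_sa :: "'a measure \<Rightarrow> 'a set set \<Rightarrow> 'a set set \<Rightarrow> real" where
  "beta_sa \<mu> U V =
     (SUP W\<in>sets (restr_meas \<mu> U \<Otimes>\<^sub>M restr_meas \<mu> V).
        \<bar>measure (distr \<mu> (restr_meas \<mu> U \<Otimes>\<^sub>M restr_meas \<mu> V) (\<lambda>\<omega>. (\<omega>, \<omega>))) W
         - measure (restr_meas \<mu> U \<Otimes>\<^sub>M restr_meas \<mu> V) W\<bar>)"

text \<open>beta(m) = sup_j beta(sigma(X_1..X_j), sigma(X_t : t >= j+m)), in 0-based coordinates\<close>
definition beta_coef :: "(nat \<Rightarrow> real) measure \<Rightarrow> nat \<Rightarrow> real" where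
  "beta_coef \<mu> m = (SUP j\<in>{1..}. beta_sa \<mu> (gen_sa \<mu> {0..<j}) (gen_sa \<mu> {j + m - 1..}))"

definition dyad :: "nat \<Rightarrow> nat \<Rightarrow> real set" where
  "dyad l i = (if i = 2 ^ l - 1 then {real i / 2 ^ l .. real (i + 1) / 2 ^ l}
               else {real i / 2 ^ l ..< real (i + 1) / 2 ^ l})"

definition cube :: "nat \<Rightarrow> nat list \<Rightarrow> real list set" where
  "cube l is = {xs. length xs = length is \<and> (\<forall>r<length is. xs ! r \<in> dyad l (is ! r))}"

definition dcubes :: "nat \<Rightarrow> nat \<Rightarrow> real list set set" where
  "dcubes k l = cube l ` {is. length is = k \<and> set is \<subseteq> {0..<2 ^ l}}"

definition emp_mu :: "nat \<Rightarrow> nat \<Rightarrow> (nat \<Rightarrow> real) \<Rightarrow> real list set \<Rightarrow> real" where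
  "emp_mu t k \<omega> B = (\<Sum>i<t. (indicator B (map \<omega> [i * k..<(i + 1) * k]) :: real)) / real t"

definition emp_gamma :: "nat \<Rightarrow> nat \<Rightarrow> nat \<Rightarrow> nat \<Rightarrow> (nat \<Rightarrow> real) \<Rightarrow> real list set \<Rightarrow> real list set \<Rightarrow> real" where
  "emp_gamma t n m j \<omega> A B =
     (\<Sum>i<t. (indicator A (map \<omega> [i * n..<i * n + j]) :: real)
            * indicator B (map \<omega> [i * n + j + m - 1..<(i + 1) * n])) / real t"

definition beta_hat :: "nat \<Rightarrow> nat \<Rightarrow> nat \<Rightarrow> (nat \<Rightarrow> real) \<Rightarrow> nat \<Rightarrow> real" where
  "beta_hat l t n \<omega> m = Max ((\<lambda>j. let j' = n - m - j + 1 in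
      (1 / 2) * (\<Sum>A\<in>dcubes j l. \<Sum>B\<in>dcubes j' l.
          \<bar>emp_gamma t n m j \<omega> A B - emp_mu t j \<omega> A * emp_mu t j' \<omega> B\<bar>)) ` {1..n - m})"

definition Ctil :: "nat \<Rightarrow> nat \<Rightarrow> nat \<Rightarrow> real" where
  "Ctil m l n = real m * 2 ^ (2 ^ (2 * n * l + 1) + 2 ^ (m * l + 1) + 2)"

end

theory Submission
  imports Defs
begin


definition apx :: "'a measure \<Rightarrow> 'a measure \<Rightarrow> 'a set set \<Rightarrow> 'a set \<Rightarrow> bool" where
  "apx M N F W \<longleftrightarrow> (\<forall>e>0. \<exists>R\<in>F. measure M (W - R \<union> (R - W)) + measure N (W - R \<union> (R - W)) < e)"

lemma finite_union_closed:
  assumes "{} \<in> F" "\<And>R1 R2. R1\<in>F \<Longrightarrow> R2\<in>F \<Longrightarrow> R1 \<union> R2 \<in> F" "\<And>i. i < (k::nat) \<Longrightarrow> R i \<in> F"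
  shows "(\<Union>i<k. R i) \<in> F"
  using assms(3)
proof (induction k)
  case 0 then show ?case using assms(1) by simp
next
  case (Suc k)
  have "(\<Union>i<Suc k. R i) = (\<Union>i<k. R i) \<union> R k" by (auto simp: lessThan_Suc)
  then show ?case using Suc assms(2) by simp
qed

lemma approx_sigma_sets:
  assumes fM: "finite_measure M" and fN: "finite_measure N" and sN: "sets N = sets M"
  and F: "F \<subseteq> sets M" "{} \<in> F" "\<And>R. R\<in>F \<Longrightarrow> space M - R \<in> F"
         "\<And>R1 R2. R1\<in>F \<Longrightarrow> R2\<in>F \<Longrightarrow> R1 \<union> R2 \<in> F"
  and G: "G \<subseteq> sets M" "\<And>g. g \<in> G \<Longrightarrow> apx M N F g"
  and W: "W \<in> sigma_sets (space M) G"
  shows "apx M N F W"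
  using W
proof (induction rule: sigma_sets.induct)
  case (Basic a) then show ?case using G by auto
next
  case Empty
  show ?case unfolding apx_def using F(2) by (intro allI impI bexI[of _ "{}"]) auto
next
  case (Compl a)
  have aM: "a \<subseteq> space M" using Compl.hyps sigma_sets_into_sp[OF _ Compl.hyps] G(1) sets.sets_into_space
    by blast
  show ?case unfolding apx_def
  proof (intro allI impI)
    fix e :: real assume "e > 0"
    then obtain R where R: "R \<in> F" "measure M (a - R \<union> (R - a)) + measure N (a - R \<union> (R - a)) < e"
      using Compl.IH unfolding apx_def by blast
    have RM: "R \<subseteq> space M" using R(1) F(1) sets.sets_into_space by blast
    have "(space M - a) - (space M - R) \<union> ((space M - R) - (space M - a)) = a - R \<union> (R - a)"
      using aM RM by blast
    then show "\<exists>R\<in>F. measure M (space M - a - R \<union> (R - (space M - a))) + measure N (space M - a - R \<union> (R - (space M - a))) < e"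
      using R F(3)[OF R(1)] by (intro bexI[of _ "space M - R"]) auto
  qed
next
  case (Union A)
  interpret M: finite_measure M by fact
  interpret N: finite_measure N by fact
  have Asets: "A i \<in> sets M" for i
    using Union.hyps sets.sigma_sets_subset[OF G(1)] by blast
  have AsetsN: "A i \<in> sets N" for i using Asets sN by simp
  show ?case unfolding apx_def
  proof (intro allI impI)
    fix e :: real assume e: "e > 0"
    define B where "B k = (\<Union>i<k. A i)" for k
    have incB: "incseq B" unfolding B_def incseq_def by (auto, meson less_le_trans lessThan_iff)
    have UB: "(\<Union>k. B k) = (\<Union>i. A i)" unfolding B_def by auto
    have BM: "B k \<in> sets M" for k unfolding B_def using Asets by auto
    have BN: "B k \<in> sets N" for k unfolding B_def using AsetsN by auto
    have lM: "(\<lambda>k. measure M (B k)) \<longlonglongrightarrow> measure M (\<Union>i. A i)"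
      using M.finite_Lim_measure_incseq[OF _ incB] BM UB by auto
    have lN: "(\<lambda>k. measure N (B k)) \<longlonglongrightarrow> measure N (\<Union>i. A i)"
      using N.finite_Lim_measure_incseq[OF _ incB] BN UB by auto
    have "\<forall>\<^sub>F k in sequentially. dist (measure M (B k)) (measure M (\<Union>i. A i)) < e/4"
      using lM e unfolding tendsto_iff by (meson divide_pos_pos zero_less_numeral)
    moreover have "\<forall>\<^sub>F k in sequentially. dist (measure N (B k)) (measure N (\<Union>i. A i)) < e/4"
      using lN e unfolding tendsto_iff by (meson divide_pos_pos zero_less_numeral)
    ultimately have "\<forall>\<^sub>F k in sequentially. dist (measure M (B k)) (measure M (\<Union>i. A i)) < e/4 \<and> dist (measure N (B k)) (measure N (\<Union>i. A i)) < e/4"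
      by (rule eventually_conj)
    then obtain k where k: "dist (measure M (B k)) (measure M (\<Union>i. A i)) < e/4"
        "dist (measure N (B k)) (measure N (\<Union>i. A i)) < e/4"
      by (auto simp: eventually_sequentially)
    have d: "e / (4 * (real k + 1)) > 0" using e by auto
    have "\<forall>i. \<exists>R\<in>F. measure M (A i - R \<union> (R - A i)) + measure N (A i - R \<union> (R - A i)) < e / (4 * (real k + 1))"
      using Union.IH d unfolding apx_def by blast
    then obtain R where R: "\<And>i. R i \<in> F"
      "\<And>i. measure M (A i - R i \<union> (R i - A i)) + measure N (A i - R i \<union> (R i - A i)) < e / (4 * (real k + 1))"
      by metis
    define RR where "RR = (\<Union>i<k. R i)"
    have RRF: "RR \<in> F" unfolding RR_def using finite_union_closed[of F k R] F R by auto
    have Rsets: "R i \<in> sets M" for i using R F by auto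
    define D where "D i = A i - R i \<union> (R i - A i)" for i
    have DM: "D i \<in> sets M" for i unfolding D_def using Rsets Asets by auto
    have DN: "D i \<in> sets N" for i using DM sN by simp
    have sub: "(\<Union>i. A i) - RR \<union> (RR - (\<Union>i. A i)) \<subseteq> ((\<Union>i. A i) - B k) \<union> (\<Union>i<k. D i)"
      unfolding RR_def B_def D_def by blast
    have "measure M ((\<Union>i. A i) - B k) = measure M (\<Union>i. A i) - measure M (B k)"
      using BM Asets by (intro M.finite_measure_Diff) (auto simp: B_def)
    then have m1: "measure M ((\<Union>i. A i) - B k) < e/4" using k(1) unfolding dist_real_def by linarith
    have "measure N ((\<Union>i. A i) - B k) = measure N (\<Union>i. A i) - measure N (B k)"
      using BN AsetsN by (intro N.finite_measure_Diff) (auto simp: B_def)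
    then have n1: "measure N ((\<Union>i. A i) - B k) < e/4" using k(2) unfolding dist_real_def by linarith
    have sumbound: "(\<Sum>i<k. measure M (D i) + measure N (D i)) \<le> real k * (e / (4 * (real k + 1)))"
      using sum_mono[of "{..<k}" "\<lambda>i. measure M (D i) + measure N (D i)" "\<lambda>i. e / (4 * (real k + 1))"] R(2)
      unfolding D_def by (auto simp: less_imp_le)
    have "real k * (e / (4 * (real k + 1))) \<le> e/4" using e by (simp add: field_simps)
    moreover have "(\<Sum>i<k. measure M (D i) + measure N (D i)) = (\<Sum>i<k. measure M (D i)) + (\<Sum>i<k. measure N (D i))"
      by (simp add: sum.distrib)
    ultimately have sb: "(\<Sum>i<k. measure M (D i)) + (\<Sum>i<k. measure N (D i)) \<le> e/4"
      using sumbound by linarith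
    have "measure M ((\<Union>i. A i) - RR \<union> (RR - (\<Union>i. A i))) \<le> measure M (((\<Union>i. A i) - B k) \<union> (\<Union>i<k. D i))"
      using sub BM DM Asets by (intro M.finite_measure_mono) auto
    also have "\<dots> \<le> measure M ((\<Union>i. A i) - B k) + measure M (\<Union>i<k. D i)"
      using BM DM Asets by (intro measure_Un_le) auto
    also have "\<dots> \<le> measure M ((\<Union>i. A i) - B k) + (\<Sum>i<k. measure M (D i))"
      using DM measure_UNION_le[of "{..<k}" D M] by simp
    finally have b1: "measure M ((\<Union>i. A i) - RR \<union> (RR - (\<Union>i. A i))) \<le> measure M ((\<Union>i. A i) - B k) + (\<Sum>i<k. measure M (D i))" .
    have "measure N ((\<Union>i. A i) - RR \<union> (RR - (\<Union>i. A i))) \<le> measure N (((\<Union>i. A i) - B k) \<union> (\<Union>i<k. D i))"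
      using sub BN DN AsetsN by (intro N.finite_measure_mono) auto
    also have "\<dots> \<le> measure N ((\<Union>i. A i) - B k) + measure N (\<Union>i<k. D i)"
      using BN DN AsetsN by (intro measure_Un_le) auto
    also have "\<dots> \<le> measure N ((\<Union>i. A i) - B k) + (\<Sum>i<k. measure N (D i))"
      using DN measure_UNION_le[of "{..<k}" D N] by simp
    finally have b2: "measure N ((\<Union>i. A i) - RR \<union> (RR - (\<Union>i. A i))) \<le> measure N ((\<Union>i. A i) - B k) + (\<Sum>i<k. measure N (D i))" .
    show "\<exists>R\<in>F. measure M ((\<Union>i. A i) - R \<union> (R - (\<Union>i. A i))) + measure N ((\<Union>i. A i) - R \<union> (R - (\<Union>i. A i))) < e"
    proof (intro bexI[of _ RR] RRF)
      show "measure M ((\<Union>i. A i) - RR \<union> (RR - (\<Union>i. A i))) + measure N ((\<Union>i. A i) - RR \<union> (RR - (\<Union>i. A i))) < e"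
        using b1 b2 m1 n1 sb e by linarith
    qed
  qed
qed


definition sh :: "nat \<Rightarrow> (nat \<Rightarrow> real) \<Rightarrow> (nat \<Rightarrow> real)" where
  "sh k \<omega> = (\<lambda>t. \<omega> (t + k))"

lemma space_seq_space: "space seq_space = {\<omega>. \<forall>i. \<omega> i \<in> {0..1}}"
  unfolding seq_space_def space_PiM by (auto simp: PiE_def Pi_def)

locale stat =
  fixes \<mu> :: "(nat \<Rightarrow> real) measure"
  assumes prob: "prob_space \<mu>" and sets_mu: "sets \<mu> = sets seq_space"
    and stationary: "distr \<mu> \<mu> (\<lambda>\<omega> t. \<omega> (Suc t)) = \<mu>"
begin

sublocale prob_space \<mu> by (rule prob)

lemma space_mu: "space \<mu> = {\<omega>. \<forall>i. \<omega> i \<in> {0..1}}"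
  using sets_eq_imp_space_eq[OF sets_mu] space_seq_space by simp

lemma coord_meas_r: "(\<lambda>\<omega>. \<omega> t) \<in> measurable \<mu> (restrict_space borel {0..1::real})"
proof -
  have "(\<lambda>\<omega>. \<omega> t) \<in> measurable seq_space (restrict_space borel {0..1::real})"
    unfolding seq_space_def by (rule measurable_component_singleton) simp
  then show ?thesis by (subst measurable_cong_sets[OF sets_mu refl])
qed

lemma coord_meas[measurable]: "(\<lambda>\<omega>. \<omega> t) \<in> borel_measurable \<mu>"
  using measurable_compose[OF coord_meas_r measurable_restrict_space1[OF measurable_ident]]
  by (simp add: comp_def)

lemma coord_set[measurable]: "A \<in> sets borel \<Longrightarrow> (\<lambda>\<omega>. \<omega> t) -` A \<inter> space \<mu> \<in> sets \<mu>"
  using coord_meas measurable_sets by blast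

lemma sh_space: "\<omega> \<in> space \<mu> \<Longrightarrow> sh k \<omega> \<in> space \<mu>"
  unfolding space_mu sh_def by auto

lemma sh_meas[measurable]: "sh k \<in> measurable \<mu> \<mu>"
proof -
  have "sh k \<in> measurable \<mu> seq_space"
    unfolding seq_space_def sh_def
    by (rule measurable_PiM_single') (auto simp: space_mu intro: coord_meas_r)
  then show ?thesis by (subst measurable_cong_sets[OF refl sets_mu])
qed

lemma sh_comp: "sh (Suc k) = (\<lambda>\<omega> t. \<omega> (Suc t)) \<circ> sh k"
  unfolding sh_def by (auto simp: fun_eq_iff)

lemma stat_k: "distr \<mu> \<mu> (sh k) = \<mu>"
proof (induction k)
  case 0
  have "sh 0 = (\<lambda>x. x)" unfolding sh_def by auto
  then show ?case by (simp add: distr_id2 sets_mu)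
next
  case (Suc k)
  have m1: "(\<lambda>\<omega> t. \<omega> (Suc t)) \<in> measurable \<mu> \<mu>" using sh_meas[of 1] unfolding sh_def by simp
  have "distr \<mu> \<mu> (sh (Suc k)) = distr (distr \<mu> \<mu> (sh k)) \<mu> (\<lambda>\<omega> t. \<omega> (Suc t))"
    unfolding sh_comp by (rule distr_distr[symmetric, OF m1 sh_meas])
  also have "\<dots> = \<mu>" using Suc stationary by simp
  finally show ?case .
qed

lemma prob_sh: "E \<in> sets \<mu> \<Longrightarrow> prob (sh k -` E \<inter> space \<mu>) = prob E"
  using measure_distr[OF sh_meas, of E k] stat_k[of k] by simp

lemma gen_gens_sub: "(\<Union>t\<in>I. {(\<lambda>\<omega>. \<omega> t) -` A \<inter> space \<mu> | A. A \<in> sets borel}) \<subseteq> sets \<mu>"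
  by auto

lemma gen_sa_sub: "gen_sa \<mu> I \<subseteq> sets \<mu>"
  unfolding gen_sa_def by (rule sets.sigma_sets_subset[OF gen_gens_sub])

lemma gen_sa_mono: "I \<subseteq> J \<Longrightarrow> gen_sa \<mu> I \<subseteq> gen_sa \<mu> J"
  unfolding gen_sa_def by (rule sigma_sets_mono') blast

lemma gen_sa_sigma: "sigma_algebra (space \<mu>) (gen_sa \<mu> I)"
  unfolding gen_sa_def by (rule sigma_algebra_sigma_sets) auto

lemma gen_sa_coord: "t \<in> I \<Longrightarrow> A \<in> sets borel \<Longrightarrow> (\<lambda>\<omega>. \<omega> t) -` A \<inter> space \<mu> \<in> gen_sa \<mu> I"
  unfolding gen_sa_def by (rule sigma_sets.Basic) blast

lemma gen_sa_space: "space \<mu> \<in> gen_sa \<mu> I"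
  unfolding gen_sa_def by (rule sigma_sets_top)

lemma gen_sa_shift:
  assumes "E \<in> gen_sa \<mu> I"
  shows "sh k -` E \<inter> space \<mu> \<in> gen_sa \<mu> ((\<lambda>t. t + k) ` I)"
  using assms unfolding gen_sa_def
proof (induction rule: sigma_sets.induct)
  case (Basic a)
  then obtain t A where tA: "t \<in> I" "A \<in> sets borel" "a = (\<lambda>\<omega>. \<omega> t) -` A \<inter> space \<mu>" by blast
  have "sh k -` a \<inter> space \<mu> = (\<lambda>\<omega>. \<omega> (t + k)) -` A \<inter> space \<mu>"
    using tA sh_space by (auto simp: sh_def)
  then show ?case using tA by (intro sigma_sets.Basic) blast
next
  case Empty then show ?case by (simp add: sigma_sets.Empty)
next
  case (Compl a)
  have "sh k -` (space \<mu> - a) \<inter> space \<mu> = space \<mu> - (sh k -` a \<inter> space \<mu>)"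
    using sh_space by auto
  then show ?case using Compl by (simp add: sigma_sets.Compl)
next
  case (Union A)
  have eq: "sh k -` (\<Union>i. A i) \<inter> space \<mu> = (\<Union>i. sh k -` A i \<inter> space \<mu>)" by auto
  show ?case unfolding eq by (rule sigma_sets.Union) (rule Union.IH)
qed

end


context stat begin

abbreviation RU where "RU I \<equiv> restr_meas \<mu> (gen_sa \<mu> I)"

lemma sets_sigma_gen: "sets (sigma (space \<mu>) (gen_sa \<mu> I)) = gen_sa \<mu> I"
  using sigma_algebra.sigma_sets_eq[OF gen_sa_sigma] gen_sa_sigma
  by (simp add: sigma_algebra.sets_measure_of_eq)

lemma subalg_gen: "subalgebra \<mu> (sigma (space \<mu>) (gen_sa \<mu> I))"
  unfolding subalgebra_def using sets_sigma_gen gen_sa_sub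
  by (simp add: sigma_algebra.space_measure_of_eq gen_sa_sigma)

lemma RU_eq: "RU I = restr_to_subalg \<mu> (sigma (space \<mu>) (gen_sa \<mu> I))"
  unfolding restr_meas_def restr_to_subalg_def sets_sigma_gen ..

lemma sets_RU[simp]: "sets (RU I) = gen_sa \<mu> I"
  unfolding RU_eq using sets_restr_to_subalg[OF subalg_gen] sets_sigma_gen by simp

lemma space_RU[simp]: "space (RU I) = space \<mu>"
  unfolding RU_eq by (simp add: space_restr_to_subalg)

lemma emeasure_RU: "A \<in> gen_sa \<mu> I \<Longrightarrow> emeasure (RU I) A = emeasure \<mu> A"
  unfolding RU_eq using emeasure_restr_to_subalg[OF subalg_gen] sets_sigma_gen by simp

lemma measure_RU: "A \<in> gen_sa \<mu> I \<Longrightarrow> measure (RU I) A = prob A"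
  unfolding measure_def by (simp add: emeasure_RU)

lemma prob_RU: "prob_space (RU I)"
  unfolding RU_eq by (rule prob_space_restr_to_subalg[OF subalg_gen prob])

lemma pair_RU: "pair_prob_space (RU I) (RU J)"
proof -
  interpret A: prob_space "RU I" by (rule prob_RU)
  interpret B: prob_space "RU J" by (rule prob_RU)
  show ?thesis by unfold_locales
qed

lemma prob_PQ: "prob_space (RU I \<Otimes>\<^sub>M RU J)"
proof -
  interpret pair_prob_space "RU I" "RU J" by (rule pair_RU)
  show ?thesis by (rule P.prob_space_axioms)
qed

lemma id_RU: "(\<lambda>\<omega>. \<omega>) \<in> measurable \<mu> (RU I)"
  unfolding measurable_def using gen_sa_sub sets.sets_into_space
  by auto

lemma diag_meas: "(\<lambda>\<omega>. (\<omega>, \<omega>)) \<in> measurable \<mu> (RU I \<Otimes>\<^sub>M RU J)"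
  by (rule measurable_Pair[OF id_RU id_RU])

abbreviation DD where "DD I J \<equiv> distr \<mu> (RU I \<Otimes>\<^sub>M RU J) (\<lambda>\<omega>. (\<omega>, \<omega>))"

lemma prob_DD: "prob_space (DD I J)"
  by (rule prob_space_distr[OF diag_meas])

lemma DD_rect: "a \<in> gen_sa \<mu> I \<Longrightarrow> b \<in> gen_sa \<mu> J \<Longrightarrow> measure (DD I J) (a \<times> b) = prob (a \<inter> b)"
proof -
  assume a: "a \<in> gen_sa \<mu> I" and b: "b \<in> gen_sa \<mu> J"
  then have "a \<times> b \<in> sets (RU I \<Otimes>\<^sub>M RU J)" by simp
  then have "measure (DD I J) (a \<times> b) = prob ((\<lambda>\<omega>. (\<omega>, \<omega>)) -` (a \<times> b) \<inter> space \<mu>)"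
    by (rule measure_distr[OF diag_meas])
  moreover have "(\<lambda>\<omega>. (\<omega>, \<omega>)) -` (a \<times> b) \<inter> space \<mu> = a \<inter> b"
    using a b gen_sa_sub sets.sets_into_space by blast
  ultimately show ?thesis by simp
qed

lemma PQ_rect: "a \<in> gen_sa \<mu> I \<Longrightarrow> b \<in> gen_sa \<mu> J \<Longrightarrow> measure (RU I \<Otimes>\<^sub>M RU J) (a \<times> b) = prob a * prob b"
proof -
  assume a: "a \<in> gen_sa \<mu> I" and b: "b \<in> gen_sa \<mu> J"
  interpret pair_prob_space "RU I" "RU J" by (rule pair_RU)
  have "emeasure (RU I \<Otimes>\<^sub>M RU J) (a \<times> b) = emeasure (RU I) a * emeasure (RU J) b"
    using a b by (intro M2.emeasure_pair_measure_Times) auto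
  then have "emeasure (RU I \<Otimes>\<^sub>M RU J) (a \<times> b) = emeasure \<mu> a * emeasure \<mu> b"
    using a b by (simp add: emeasure_RU)
  then show ?thesis unfolding measure_def by (simp add: enn2real_mult)
qed

lemma beta_sa_term_le1:
  "\<bar>measure (DD I J) W - measure (RU I \<Otimes>\<^sub>M RU J) W\<bar> \<le> 1"
proof -
  interpret D: prob_space "DD I J" by (rule prob_DD)
  interpret Q: prob_space "RU I \<Otimes>\<^sub>M RU J" by (rule prob_PQ)
  have "measure (DD I J) W \<le> 1" "measure (RU I \<Otimes>\<^sub>M RU J) W \<le> 1" by auto
  moreover have "measure (DD I J) W \<ge> 0" "measure (RU I \<Otimes>\<^sub>M RU J) W \<ge> 0" by auto
  ultimately show ?thesis unfolding abs_le_iff by linarith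
qed

lemma beta_sa_ge:
  assumes "W \<in> sets (RU I \<Otimes>\<^sub>M RU J)"
  shows "\<bar>measure (DD I J) W - measure (RU I \<Otimes>\<^sub>M RU J) W\<bar> \<le> beta_sa \<mu> (gen_sa \<mu> I) (gen_sa \<mu> J)"
  unfolding beta_sa_def
  by (rule cSUP_upper[OF assms]) (auto intro!: bdd_aboveI[of _ 1] beta_sa_term_le1)

lemma beta_sa_le1: "beta_sa \<mu> (gen_sa \<mu> I) (gen_sa \<mu> J) \<le> 1"
  unfolding beta_sa_def
  by (rule cSUP_least) (auto intro: beta_sa_term_le1)

lemma beta_sa_nonneg: "0 \<le> beta_sa \<mu> (gen_sa \<mu> I) (gen_sa \<mu> J)"
  using beta_sa_ge[of "{}" I J] by simp

lemma cov_le_beta: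
  assumes "a \<in> gen_sa \<mu> I" "b \<in> gen_sa \<mu> J"
  shows "\<bar>prob (a \<inter> b) - prob a * prob b\<bar> \<le> beta_sa \<mu> (gen_sa \<mu> I) (gen_sa \<mu> J)"
  using beta_sa_ge[of "a \<times> b" I J] assms DD_rect PQ_rect by simp

lemma beta_coef_bdd: "bdd_above ((\<lambda>j. beta_sa \<mu> (gen_sa \<mu> {0..<j}) (gen_sa \<mu> {j + m - 1..})) ` {1..})"
  by (rule bdd_aboveI[of _ 1]) (auto intro: beta_sa_le1)

lemma beta_coef_ge: "j \<ge> 1 \<Longrightarrow> beta_sa \<mu> (gen_sa \<mu> {0..<j}) (gen_sa \<mu> {j + m - 1..}) \<le> beta_coef \<mu> m"
  unfolding beta_coef_def by (rule cSUP_upper[OF _ beta_coef_bdd]) simp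

lemma beta_coef_nonneg: "0 \<le> beta_coef \<mu> m"
  using beta_coef_ge[of 1 m] beta_sa_nonneg[of "{0..<1}" "{1 + m - 1..}"] by linarith

lemma beta_coef_le1: "beta_coef \<mu> m \<le> 1"
  unfolding beta_coef_def by (rule cSUP_least) (auto intro: beta_sa_le1)

end


definition idx :: "nat \<Rightarrow> real \<Rightarrow> nat" where
  "idx l x = min (nat \<lfloor>x * 2 ^ l\<rfloor>) (2 ^ l - 1)"

definition Idx :: "nat \<Rightarrow> nat \<Rightarrow> nat list set" where
  "Idx k l = {is. set is \<subseteq> {0..<2 ^ l} \<and> length is = k}"

lemma idx_lt: "idx l x < 2 ^ l"
  unfolding idx_def by (rule le_less_trans[OF min.cobounded2]) simp

lemma dyad_iff:
  assumes x: "0 \<le> x" "x \<le> 1" and i: "i < 2 ^ l"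
  shows "x \<in> dyad l i \<longleftrightarrow> idx l x = i"
proof -
  have p: "(2::real) ^ l > 0" by simp
  have fl: "\<lfloor>x * 2 ^ l\<rfloor> \<ge> 0" using x by simp
  have x1: "x * 2 ^ l \<le> 2 ^ l" using x by simp
  show ?thesis
  proof (cases "i = 2 ^ l - 1")
    case True
    have "x \<in> dyad l i \<longleftrightarrow> real i / 2 ^ l \<le> x" using True x unfolding dyad_def
      by (simp add: of_nat_diff)
    also have "\<dots> \<longleftrightarrow> real i \<le> x * 2 ^ l" using p by (simp add: field_simps)
    also have "\<dots> \<longleftrightarrow> i \<le> nat \<lfloor>x * 2 ^ l\<rfloor>"
      by (metis fl le_floor_iff le_nat_iff of_int_of_nat_eq)
    also have "\<dots> \<longleftrightarrow> idx l x = i" unfolding idx_def True by (auto simp: min_def)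
    finally show ?thesis .
  next
    case False
    then have il: "i < 2 ^ l - 1" using i by simp
    have "x \<in> dyad l i \<longleftrightarrow> real i / 2 ^ l \<le> x \<and> x < real (i + 1) / 2 ^ l"
      using False unfolding dyad_def by simp
    also have "\<dots> \<longleftrightarrow> real i \<le> x * 2 ^ l \<and> x * 2 ^ l < real i + 1" using p by (simp add: field_simps)
    also have "\<dots> \<longleftrightarrow> \<lfloor>x * 2 ^ l\<rfloor> = int i" by (simp add: floor_eq_iff)
    also have "\<dots> \<longleftrightarrow> nat \<lfloor>x * 2 ^ l\<rfloor> = i" using fl by auto
    also have "\<dots> \<longleftrightarrow> idx l x = i" unfolding idx_def using il by (auto simp: min_def)
    finally show ?thesis .
  qed
qed

lemma dyad_borel[measurable]: "dyad l i \<in> sets borel"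
  unfolding dyad_def by auto

lemma nat_floor_div:
  fixes y :: real
  shows "nat \<lfloor>y * 2 ^ d\<rfloor> div 2 ^ d = nat \<lfloor>y\<rfloor>"
proof -
  have "\<lfloor>y * 2 ^ d / real_of_int (2 ^ d)\<rfloor> = \<lfloor>y * 2 ^ d\<rfloor> div 2 ^ d"
    by (rule floor_divide_real_eq_div) simp
  then have e: "\<lfloor>y\<rfloor> = \<lfloor>y * 2 ^ d\<rfloor> div 2 ^ d" by simp
  have "nat (\<lfloor>y * 2 ^ d\<rfloor> div 2 ^ d) = nat \<lfloor>y * 2 ^ d\<rfloor> div nat (2 ^ d)"
    by (rule nat_div_distrib') simp
  then show ?thesis using e by (simp add: nat_power_eq)
qed

lemma divaux: "r < (q::nat) \<Longrightarrow> (a * q + r) div q = a"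
  by simp

lemma idx_refine:
  assumes "l \<le> l'"
  shows "idx l x = idx l' x div 2 ^ (l' - l)"
proof -
  define d where "d = l' - l"
  have l': "l' = l + d" using assms d_def by simp
  define a where "a = nat \<lfloor>x * 2 ^ l\<rfloor>"
  have xe: "x * 2 ^ l' = (x * 2 ^ l) * 2 ^ d" unfolding l' by (simp add: power_add)
  have A: "nat \<lfloor>x * 2 ^ l'\<rfloor> div 2 ^ d = a" unfolding a_def xe by (rule nat_floor_div)
  have B: "(2 ^ l' - 1) div 2 ^ d = (2::nat) ^ l - 1"
  proof -
    have "(2::nat) ^ l' - 1 = (2 ^ l - 1) * 2 ^ d + (2 ^ d - 1)"
      unfolding l' power_add by (simp add: algebra_simps diff_mult_distrib)
    moreover have "(2::nat) ^ d - 1 < 2 ^ d" by simp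
    ultimately show ?thesis using divaux[of "2 ^ d - 1" "2 ^ d" "2 ^ l - 1"] by simp
  qed
  show ?thesis
  proof (cases "nat \<lfloor>x * 2 ^ l'\<rfloor> \<le> 2 ^ l' - 1")
    case True
    then have "nat \<lfloor>x * 2 ^ l'\<rfloor> div 2 ^ d \<le> (2 ^ l' - 1) div 2 ^ d" by (rule div_le_mono)
    then show ?thesis using True A B unfolding idx_def d_def[symmetric] a_def by (simp add: min_def)
  next
    case False
    then have "(2 ^ l' - 1) div 2 ^ d \<le> nat \<lfloor>x * 2 ^ l'\<rfloor> div 2 ^ d" by (intro div_le_mono) simp
    then show ?thesis using False A B unfolding idx_def d_def[symmetric] a_def by (simp add: min_def)
  qed
qed

lemma finite_Idx: "finite (Idx k l)"
  unfolding Idx_def by (rule finite_lists_length_eq) simp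

lemma card_Idx: "card (Idx k l) = 2 ^ (l * k)"
  unfolding Idx_def by (simp add: card_lists_length_eq power_mult)

lemma cube_iff:
  assumes "set xs \<subseteq> {0..1}" "is \<in> Idx (length is) l"
  shows "xs \<in> cube l is \<longleftrightarrow> map (idx l) xs = is"
proof -
  have "xs \<in> cube l is \<longleftrightarrow> length xs = length is \<and> (\<forall>r<length is. idx l (xs ! r) = is ! r)"
    unfolding cube_def using assms dyad_iff unfolding Idx_def
    by (auto simp: subset_iff)
  also have "\<dots> \<longleftrightarrow> map (idx l) xs = is" by (auto simp: list_eq_iff_nth_eq)
  finally show ?thesis .
qed

lemma left_pts: "is \<in> Idx k l \<Longrightarrow> set (map (\<lambda>i. real i / 2 ^ l) is) \<subseteq> {0..1}"
proof
  fix y assume a: "is \<in> Idx k l" and "y \<in> set (map (\<lambda>i. real i / 2 ^ l) is)"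
  then obtain i where "i \<in> set is" "y = real i / 2 ^ l" by auto
  then have "i < 2 ^ l" "y = real i / 2 ^ l" using a unfolding Idx_def by auto
  moreover have "real i \<le> 2 ^ l" using \<open>i < 2 ^ l\<close>
    by (metis less_imp_le of_nat_le_iff of_nat_numeral of_nat_power)
  ultimately show "y \<in> {0..1}" by (auto simp: divide_le_eq)
qed

lemma cube_nonempty: "is \<in> Idx k l \<Longrightarrow> map (\<lambda>i. real i / 2 ^ l) is \<in> cube l is"
proof -
  assume a: "is \<in> Idx k l"
  have "set (map (\<lambda>i. real i / 2 ^ l) is) \<subseteq> {0..1}" using left_pts[OF a] .
  moreover have "map (idx l) (map (\<lambda>i. real i / 2 ^ l) is) = is"
  proof -
    have "idx l (real i / 2 ^ l) = i" if "i < 2 ^ l" for i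
      using that unfolding idx_def by (simp add: min_def)
    then show ?thesis using a unfolding Idx_def by (auto simp: map_idI subset_iff)
  qed
  ultimately show ?thesis using cube_iff a unfolding Idx_def by auto
qed

lemma inj_cube: "inj_on (cube l) (Idx k l)"
proof
  fix a b assume ab: "a \<in> Idx k l" "b \<in> Idx k l" "cube l a = cube l b"
  let ?x = "map (\<lambda>i. real i / 2 ^ l) a"
  have s: "set ?x \<subseteq> {0..1}" using left_pts[OF ab(1)] .
  have "?x \<in> cube l b" using cube_nonempty[OF ab(1)] ab(3) by simp
  then have "map (idx l) ?x = b" using cube_iff[OF s] ab(2) unfolding Idx_def by auto
  moreover have "map (idx l) ?x = a" using cube_iff[OF s] ab(1) cube_nonempty[OF ab(1)] unfolding Idx_def by auto
  ultimately show "a = b" by simp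
qed

lemma dcubes_eq: "dcubes k l = cube l ` Idx k l"
  unfolding dcubes_def Idx_def by (auto intro!: image_cong)

lemma sum_dcubes: "(\<Sum>A\<in>dcubes k l. f A) = (\<Sum>is\<in>Idx k l. f (cube l is))"
  unfolding dcubes_eq by (rule sum.reindex[OF inj_cube, unfolded comp_def])


lemma sh_sh: "sh a (sh b \<omega>) = sh (a + b) \<omega>"
  unfolding sh_def by (simp add: algebra_simps)

lemma sum_inj_le:
  fixes f :: "nat \<Rightarrow> real"
  assumes "summable f" "\<And>n. 0 \<le> f n" "finite K" "inj_on g K"
  shows "(\<Sum>k\<in>K. f (g k)) \<le> suminf f"
proof -
  have "(\<Sum>k\<in>K. f (g k)) = (\<Sum>x\<in>g ` K. f x)" using sum.reindex[OF assms(4), of f] by simp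
  also have "\<dots> \<le> suminf f" using assms by (intro sum_le_suminf) auto
  finally show ?thesis .
qed

context stat begin

definition blk :: "nat \<Rightarrow> (nat \<Rightarrow> real) set \<Rightarrow> nat \<Rightarrow> (nat \<Rightarrow> real) set" where
  "blk L E i = sh (i * L) -` E \<inter> space \<mu>"

lemma blk_sets[measurable]: "E \<in> sets \<mu> \<Longrightarrow> blk L E i \<in> sets \<mu>"
  unfolding blk_def using sh_meas by (simp add: measurable_sets)

lemma prob_blk: "E \<in> sets \<mu> \<Longrightarrow> prob (blk L E i) = prob E"
  unfolding blk_def by (rule prob_sh)

lemma blk_inter: "E \<in> sets \<mu> \<Longrightarrow> blk L E i \<inter> blk L E (i + k) = sh (i * L) -` (E \<inter> blk L E k) \<inter> space \<mu>"
  unfolding blk_def using sh_space by (auto simp: sh_sh algebra_simps)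

lemma prob_blk_inter: "E \<in> sets \<mu> \<Longrightarrow> prob (blk L E i \<inter> blk L E (i + k)) = prob (E \<inter> blk L E k)"
  unfolding blk_inter by (rule prob_sh) (auto)

lemma cov_blk:
  assumes E: "E \<in> gen_sa \<mu> {0..<L}" and L: "L \<ge> 1" and k: "k \<ge> 1"
  shows "\<bar>prob (E \<inter> blk L E k) - (prob E)\<^sup>2\<bar> \<le> beta_coef \<mu> (Suc ((k - 1) * L))"
proof -
  have "blk L E k \<in> gen_sa \<mu> ((\<lambda>t. t + k * L) ` {0..<L})"
    unfolding blk_def by (rule gen_sa_shift[OF E])
  moreover have "(\<lambda>t. t + k * L) ` {0..<L} \<subseteq> {L + Suc ((k - 1) * L) - 1..}"
    using k by (auto simp: algebra_simps)
  ultimately have b: "blk L E k \<in> gen_sa \<mu> {L + Suc ((k - 1) * L) - 1..}" using gen_sa_mono by blast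
  have "prob E * prob (blk L E k) = (prob E)\<^sup>2"
    using E gen_sa_sub[of "{0..<L}"] prob_blk[of E L k] by (auto simp: power2_eq_square)
  then have "\<bar>prob (E \<inter> blk L E k) - (prob E)\<^sup>2\<bar> \<le> beta_sa \<mu> (gen_sa \<mu> {0..<L}) (gen_sa \<mu> {L + Suc ((k - 1) * L) - 1..})"
    using cov_le_beta[OF E b] by simp
  also have "\<dots> \<le> beta_coef \<mu> (Suc ((k - 1) * L))" using L by (rule beta_coef_ge)
  finally show ?thesis .
qed

lemma beta_sum_bound:
  assumes summ: "summable (\<lambda>m. beta_coef \<mu> (Suc m))" and L: "L \<ge> 1"
    and c: "\<And>k. \<bar>c k\<bar> \<le> (if k = 0 then 1 else beta_coef \<mu> (Suc ((k - 1) * L)))"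
    and i: "i < t"
  shows "(\<Sum>i'<t. \<bar>c (if i \<le> i' then i' - i else i - i')\<bar>) \<le> 1 + 2 * (\<Sum>m. beta_coef \<mu> (Suc m))"
proof -
  let ?f = "\<lambda>m. beta_coef \<mu> (Suc m)"
  let ?S = "\<Sum>m. beta_coef \<mu> (Suc m)"
  let ?a = "\<lambda>i'. \<bar>c (if i \<le> i' then i' - i else i - i')\<bar>"
  have split: "{..<t} = {..<i} \<union> {i} \<union> {i<..<t}" using i by auto
  have "(\<Sum>i'<t. ?a i') = (\<Sum>i'\<in>{..<i}. ?a i') + ?a i + (\<Sum>i'\<in>{i<..<t}. ?a i')"
    unfolding split by (subst sum.union_disjoint, auto)+
  moreover have "?a i \<le> 1" using c[of 0] by simp
  moreover have "(\<Sum>i'\<in>{..<i}. ?a i') \<le> ?S"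
  proof -
    have "(\<Sum>i'\<in>{..<i}. ?a i') \<le> (\<Sum>i'\<in>{..<i}. ?f ((i - i' - 1) * L))"
    proof (rule sum_mono)
      fix i' assume "i' \<in> {..<i}"
      then have "i' < i" by simp
      then show "?a i' \<le> ?f ((i - i' - 1) * L)" using c[of "i - i'"] by simp
    qed
    also have "\<dots> \<le> ?S"
    proof (rule sum_inj_le[OF summ])
      show "inj_on (\<lambda>i'. (i - i' - 1) * L) {..<i}" using L by (auto simp: inj_on_def)
    qed (auto intro: beta_coef_nonneg)
    finally show ?thesis .
  qed
  moreover have "(\<Sum>i'\<in>{i<..<t}. ?a i') \<le> ?S"
  proof -
    have "(\<Sum>i'\<in>{i<..<t}. ?a i') \<le> (\<Sum>i'\<in>{i<..<t}. ?f ((i' - i - 1) * L))"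
    proof (rule sum_mono)
      fix i' assume "i' \<in> {i<..<t}"
      then have "i < i'" by simp
      then show "?a i' \<le> ?f ((i' - i - 1) * L)" using c[of "i' - i"] by simp
    qed
    also have "\<dots> \<le> ?S"
    proof (rule sum_inj_le[OF summ])
      show "inj_on (\<lambda>i'. (i' - i - 1) * L) {i<..<t}" using L by (auto simp: inj_on_def)
    qed (auto intro: beta_coef_nonneg)
    finally show ?thesis .
  qed
  ultimately show ?thesis by linarith
qed

lemma conc:
  assumes summ: "summable (\<lambda>m. beta_coef \<mu> (Suc m))"
    and E: "E \<in> gen_sa \<mu> {0..<L}" and L: "L \<ge> 1" and t: "t \<ge> 1" and eta: "\<eta> > 0"
  shows "prob {\<omega>\<in>space \<mu>. \<eta> \<le> \<bar>(\<Sum>i<t. indicator (blk L E i) \<omega>) / real t - prob E\<bar>}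
           \<le> (1 + 2 * (\<Sum>m. beta_coef \<mu> (Suc m))) / (real t * \<eta>\<^sup>2)"
proof -
  let ?S = "\<Sum>m. beta_coef \<mu> (Suc m)"
  define p where "p = prob E"
  define X where "X i \<omega> = (indicator (blk L E i) \<omega> :: real)" for i \<omega>
  define u where "u \<omega> = ((\<Sum>i<t. X i \<omega>) / real t - p)\<^sup>2" for \<omega>
  have Es: "E \<in> sets \<mu>" using E gen_sa_sub by blast
  have Xm[measurable]: "X i \<in> borel_measurable \<mu>" for i unfolding X_def using Es by simp
  have X01: "0 \<le> X i \<omega> \<and> X i \<omega> \<le> 1" for i \<omega> unfolding X_def by (simp add: indicator_def)
  have p01: "0 \<le> p \<and> p \<le> 1" unfolding p_def by simp
  define a where "a i \<omega> = X i \<omega> - p" for i \<omega>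
  have am[measurable]: "a i \<in> borel_measurable \<mu>" for i unfolding a_def by simp
  have a1: "\<bar>a i \<omega>\<bar> \<le> 1" for i \<omega> unfolding a_def using X01[of i \<omega>] p01 by auto
  have tpos: "real t > 0" using t by simp
  have u_eq: "u \<omega> = (\<Sum>i<t. \<Sum>i'<t. a i \<omega> * a i' \<omega>) / (real t)\<^sup>2" for \<omega>
  proof -
    have "(\<Sum>i<t. X i \<omega>) / real t - p = (\<Sum>i<t. a i \<omega>) / real t"
      unfolding a_def using tpos by (simp add: sum_subtractf field_simps)
    then show ?thesis unfolding u_def
      by (simp add: power_divide power2_eq_square sum_product)
  qed
  have int_a: "integrable \<mu> (\<lambda>\<omega>. a i \<omega> * a i' \<omega>)" for i i'
  proof (rule integrable_const_bound[where B=1])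
    show "AE \<omega> in \<mu>. norm (a i \<omega> * a i' \<omega>) \<le> 1"
      using a1 by (intro AE_I2) (auto simp: abs_mult intro: mult_le_one)
  qed simp
  define c where "c k = prob (E \<inter> blk L E k) - p\<^sup>2" for k
  have int_aa: "(\<integral>\<omega>. a i \<omega> * a i' \<omega> \<partial>\<mu>) = prob (blk L E i \<inter> blk L E i') - p\<^sup>2" for i i'
  proof -
    have eq: "a i \<omega> * a i' \<omega> = indicator (blk L E i \<inter> blk L E i') \<omega> - p * X i \<omega> - p * X i' \<omega> + p\<^sup>2" for \<omega>
      unfolding a_def X_def by (auto simp: indicator_def power2_eq_square algebra_simps)
    have ii: "integrable \<mu> (indicator (blk L E i \<inter> blk L E i') :: _ \<Rightarrow> real)"
      using Es by (intro integrable_real_indicator) (auto simp: emeasure_eq_measure)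
    have iX: "integrable \<mu> (X j)" for j unfolding X_def using Es by (intro integrable_real_indicator) (auto simp: emeasure_eq_measure)
    have "(\<integral>\<omega>. a i \<omega> * a i' \<omega> \<partial>\<mu>) = (\<integral>\<omega>. indicator (blk L E i \<inter> blk L E i') \<omega> - p * X i \<omega> - p * X i' \<omega> + p\<^sup>2 \<partial>\<mu>)"
      unfolding eq ..
    also have "\<dots> = prob (blk L E i \<inter> blk L E i') - p * prob (blk L E i) - p * prob (blk L E i') + p\<^sup>2"
      using ii iX Es unfolding X_def by (simp add: prob_space)
    also have "\<dots> = prob (blk L E i \<inter> blk L E i') - p\<^sup>2"
      using prob_blk[OF Es] unfolding p_def by (simp add: power2_eq_square)
    finally show ?thesis .
  qed
  have cc: "prob (blk L E i \<inter> blk L E i') - p\<^sup>2 = c (if i \<le> i' then i' - i else i - i')" for i i'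
  proof (cases "i \<le> i'")
    case True
    then have "blk L E i \<inter> blk L E i' = blk L E i \<inter> blk L E (i + (i' - i))" by simp
    then show ?thesis using True prob_blk_inter[OF Es, of L i "i' - i"] unfolding c_def by simp
  next
    case False
    then have "blk L E i \<inter> blk L E i' = blk L E i' \<inter> blk L E (i' + (i - i'))" by auto
    then show ?thesis using False prob_blk_inter[OF Es, of L i' "i - i'"] unfolding c_def by (simp add: Int_commute)
  qed
  have cb: "\<bar>c k\<bar> \<le> (if k = 0 then 1 else beta_coef \<mu> (Suc ((k - 1) * L)))" for k
  proof (cases "k = 0")
    case True
    have "blk L E 0 = E" unfolding blk_def sh_def using Es sets.sets_into_space by auto
    then have "c 0 = p - p\<^sup>2" unfolding c_def p_def by simp
    moreover have "0 \<le> p * p" "p * p \<le> 1" using p01 by (auto intro: mult_le_one)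
    moreover have "\<bar>p - p * p\<bar> \<le> 1" using \<open>0 \<le> p * p\<close> \<open>p * p \<le> 1\<close> p01 unfolding abs_le_iff by linarith
    ultimately show ?thesis using True by (simp add: power2_eq_square)
  next
    case False
    then show ?thesis using cov_blk[OF E L, of k] unfolding c_def p_def by simp
  qed
  have intu: "(\<integral>\<omega>. u \<omega> \<partial>\<mu>) = (\<Sum>i<t. \<Sum>i'<t. c (if i \<le> i' then i' - i else i - i')) / (real t)\<^sup>2"
    unfolding u_eq using int_a by (simp add: int_aa cc)
  have "(\<Sum>i<t. \<Sum>i'<t. c (if i \<le> i' then i' - i else i - i')) \<le> (\<Sum>i<t. 1 + 2 * ?S)"
  proof (rule sum_mono)
    fix i assume "i \<in> {..<t}"
    then have "i < t" by simp
    have "(\<Sum>i'<t. c (if i \<le> i' then i' - i else i - i')) \<le> (\<Sum>i'<t. \<bar>c (if i \<le> i' then i' - i else i - i')\<bar>)"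
      by (rule sum_mono) simp
    also have "\<dots> \<le> 1 + 2 * ?S" by (rule beta_sum_bound[OF summ L cb \<open>i < t\<close>])
    finally show "(\<Sum>i'<t. c (if i \<le> i' then i' - i else i - i')) \<le> 1 + 2 * ?S" .
  qed
  then have "(\<integral>\<omega>. u \<omega> \<partial>\<mu>) \<le> real t * (1 + 2 * ?S) / (real t)\<^sup>2"
    unfolding intu using tpos by (intro divide_right_mono) auto
  also have "\<dots> = (1 + 2 * ?S) / real t" using tpos by (simp add: power2_eq_square)
  finally have intu_le: "(\<integral>\<omega>. u \<omega> \<partial>\<mu>) \<le> (1 + 2 * ?S) / real t" .
  have um[measurable]: "u \<in> borel_measurable \<mu>" unfolding u_def by simp
  have intu_int: "integrable \<mu> u"
  proof (rule integrable_const_bound[where B=1])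
    show "AE \<omega> in \<mu>. norm (u \<omega>) \<le> 1"
    proof
      fix \<omega>
      have "0 \<le> (\<Sum>i<t. X i \<omega>)" by (rule sum_nonneg) (use X01 in auto)
      moreover have "(\<Sum>i<t. X i \<omega>) \<le> real t" using sum_mono[of "{..<t}" "\<lambda>i. X i \<omega>" "\<lambda>_. 1"] X01 by auto
      ultimately have "0 \<le> (\<Sum>i<t. X i \<omega>) / real t \<and> (\<Sum>i<t. X i \<omega>) / real t \<le> 1"
        using tpos by (auto simp: divide_le_eq)
      then have "\<bar>(\<Sum>i<t. X i \<omega>) / real t - p\<bar> \<le> 1" using p01 by auto
      then have "\<bar>(\<Sum>i<t. X i \<omega>) / real t - p\<bar>\<^sup>2 \<le> 1" by (simp add: abs_square_le_1)
      then show "norm (u \<omega>) \<le> 1" unfolding u_def by simp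
    qed
  qed simp
  have "prob {\<omega>\<in>space \<mu>. u \<omega> \<ge> \<eta>\<^sup>2} \<le> (\<integral>\<omega>. u \<omega> \<partial>\<mu>) / \<eta>\<^sup>2"
    by (rule integral_Markov_inequality_measure[OF intu_int, of "space \<mu>"]) (use eta in \<open>auto simp: u_def\<close>)
  also have "\<dots> \<le> ((1 + 2 * ?S) / real t) / \<eta>\<^sup>2" using intu_le eta by (intro divide_right_mono) auto
  finally have mk: "prob {\<omega>\<in>space \<mu>. u \<omega> \<ge> \<eta>\<^sup>2} \<le> (1 + 2 * ?S) / (real t * \<eta>\<^sup>2)" by simp
  have "{\<omega>\<in>space \<mu>. \<eta> \<le> \<bar>(\<Sum>i<t. indicator (blk L E i) \<omega>) / real t - prob E\<bar>} = {\<omega>\<in>space \<mu>. u \<omega> \<ge> \<eta>\<^sup>2}"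
  proof -
    have sq: "\<eta> \<le> \<bar>x\<bar> \<longleftrightarrow> \<eta>\<^sup>2 \<le> x\<^sup>2" for x :: real
      using eta abs_le_square_iff[of \<eta> x] by simp
    show ?thesis unfolding u_def X_def p_def using sq by blast
  qed
  then show ?thesis using mk by simp
qed

end


lemma map_upt_shift: "map f [a + s..<b + s] = map (\<lambda>x. f (x + s)) [a..<b]"
  by (simp add: list_eq_iff_nth_eq algebra_simps)

context stat begin

definition cyl :: "nat \<Rightarrow> nat \<Rightarrow> nat list \<Rightarrow> (nat \<Rightarrow> real) set" where
  "cyl l a is = {\<omega>\<in>space \<mu>. map (idx l) (map \<omega> [a..<a + length is]) = is}"

lemma gen_sa_INT:
  assumes "finite K" "\<And>r. r \<in> K \<Longrightarrow> B r \<in> gen_sa \<mu> I"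
  shows "space \<mu> \<inter> (\<Inter>r\<in>K. B r) \<in> gen_sa \<mu> I"
  using assms
proof (induction K rule: finite_induct)
  case empty then show ?case using gen_sa_space by simp
next
  case (insert x F)
  interpret G: sigma_algebra "space \<mu>" "gen_sa \<mu> I" by (rule gen_sa_sigma)
  have "space \<mu> \<inter> (\<Inter>r\<in>insert x F. B r) = B x \<inter> (space \<mu> \<inter> (\<Inter>r\<in>F. B r))" by auto
  then show ?case using insert by (simp add: G.Int)
qed

lemma cyl_alt:
  assumes "is \<in> Idx k l"
  shows "cyl l a is = space \<mu> \<inter> (\<Inter>r\<in>{..<k}. (\<lambda>\<omega>. \<omega> (a + r)) -` dyad l (is ! r) \<inter> space \<mu>)"
proof -
  have len: "length is = k" and lt: "\<And>r. r < k \<Longrightarrow> is ! r < 2 ^ l"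
    using assms unfolding Idx_def by (auto simp: subset_iff)
  have "\<omega> \<in> cyl l a is \<longleftrightarrow> \<omega> \<in> space \<mu> \<and> (\<forall>r<k. \<omega> (a + r) \<in> dyad l (is ! r))" for \<omega>
  proof -
    have "\<omega> \<in> cyl l a is \<longleftrightarrow> \<omega> \<in> space \<mu> \<and> (\<forall>r<k. idx l (\<omega> (a + r)) = is ! r)"
      unfolding cyl_def len by (auto simp: list_eq_iff_nth_eq len)
    also have "\<dots> \<longleftrightarrow> \<omega> \<in> space \<mu> \<and> (\<forall>r<k. \<omega> (a + r) \<in> dyad l (is ! r))"
      using dyad_iff lt space_mu by auto
    finally show ?thesis .
  qed
  then show ?thesis by auto
qed

lemma cyl_gen: "is \<in> Idx k l \<Longrightarrow> cyl l a is \<in> gen_sa \<mu> {a..<a + k}"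
  unfolding cyl_alt by (rule gen_sa_INT) (auto intro!: gen_sa_coord)

lemma cyl_sets[measurable]: "is \<in> Idx k l \<Longrightarrow> cyl l a is \<in> sets \<mu>"
  using cyl_gen gen_sa_sub by blast

lemma blk_mem: "\<omega> \<in> space \<mu> \<Longrightarrow> \<omega> \<in> blk L G i \<longleftrightarrow> sh (i * L) \<omega> \<in> G"
  unfolding blk_def by auto

lemma sh_cyl: "\<omega> \<in> space \<mu> \<Longrightarrow> sh s \<omega> \<in> cyl l a is \<longleftrightarrow> map (idx l) (map \<omega> [s + a..<s + a + length is]) = is"
proof -
  assume w: "\<omega> \<in> space \<mu>"
  have "sh s \<omega> \<in> space \<mu>" using sh_space[OF w] .
  moreover have "map (sh s \<omega>) [a..<a + length is] = map \<omega> [s + a..<s + a + length is]"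
    using map_upt_shift[of \<omega> a s "a + length is"] by (simp add: sh_def add.commute add.left_commute)
  ultimately show ?thesis unfolding cyl_def by (simp del: map_map)
qed

lemma cube_map:
  assumes "\<omega> \<in> space \<mu>" "is \<in> Idx k l"
  shows "map \<omega> [a..<a + k] \<in> cube l is \<longleftrightarrow> map (idx l) (map \<omega> [a..<a + k]) = is"
proof -
  have "set (map \<omega> [a..<a + k]) \<subseteq> {0..1}" using assms(1) space_mu by auto
  moreover have "is \<in> Idx (length is) l" using assms(2) unfolding Idx_def by auto
  ultimately show ?thesis by (rule cube_iff)
qed

lemma emp_mu_eq:
  assumes "\<omega> \<in> space \<mu>" "is \<in> Idx k l"
  shows "emp_mu t k \<omega> (cube l is) = (\<Sum>i<t. indicator (blk k (cyl l 0 is) i) \<omega>) / real t"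
proof -
  have len: "length is = k" using assms(2) unfolding Idx_def by auto
  have "indicator (cube l is) (map \<omega> [i * k..<(i + 1) * k]) = (indicator (blk k (cyl l 0 is) i) \<omega> :: real)" for i
  proof -
    have "map \<omega> [i * k..<(i + 1) * k] \<in> cube l is \<longleftrightarrow> \<omega> \<in> blk k (cyl l 0 is) i"
      using cube_map[OF assms, of "i * k"] blk_mem[OF assms(1)] sh_cyl[OF assms(1)] len
      by (simp add: algebra_simps)
    then show ?thesis by (simp add: indicator_def)
  qed
  then show ?thesis unfolding emp_mu_def by simp
qed

lemma emp_gamma_eq:
  assumes "\<omega> \<in> space \<mu>" "is1 \<in> Idx j l" "is2 \<in> Idx j' l" "j + m - 1 + j' = n" "m \<ge> 1"
  shows "emp_gamma t n m j \<omega> (cube l is1) (cube l is2)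
          = (\<Sum>i<t. indicator (blk n (cyl l 0 is1 \<inter> cyl l (j + m - 1) is2) i) \<omega>) / real t"
proof -
  have len1: "length is1 = j" using assms(2) unfolding Idx_def by auto
  have len2: "length is2 = j'" using assms(3) unfolding Idx_def by auto
  have "(indicator (cube l is1) (map \<omega> [i * n..<i * n + j]) :: real)
          * indicator (cube l is2) (map \<omega> [i * n + j + m - 1..<(i + 1) * n])
        = indicator (blk n (cyl l 0 is1 \<inter> cyl l (j + m - 1) is2) i) \<omega>" for i
  proof -
    have e2: "(i + 1) * n = (i * n + j + m - 1) + j'" using assms(4,5) by (simp add: algebra_simps)
    have "map \<omega> [i * n..<i * n + j] \<in> cube l is1 \<longleftrightarrow> sh (i * n) \<omega> \<in> cyl l 0 is1"
      using cube_map[OF assms(1,2), of "i * n"] sh_cyl[OF assms(1), of "i * n" l 0 is1] len1 by simp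
    moreover have "map \<omega> [i * n + j + m - 1..<(i + 1) * n] \<in> cube l is2 \<longleftrightarrow> sh (i * n) \<omega> \<in> cyl l (j + m - 1) is2"
      using cube_map[OF assms(1,3), of "i * n + j + m - 1"] sh_cyl[OF assms(1), of "i * n" l "j + m - 1" is2] len2 e2 assms(5)
      by (simp add: algebra_simps)
    ultimately show ?thesis using blk_mem[OF assms(1)] by (simp add: indicator_def)
  qed
  then show ?thesis unfolding emp_gamma_def by simp
qed

definition Hd :: "nat \<Rightarrow> nat \<Rightarrow> nat \<Rightarrow> nat \<Rightarrow> real" where
  "Hd l n m j = (1 / 2) * (\<Sum>is1\<in>Idx j l. \<Sum>is2\<in>Idx (n - m - j + 1) l.
      \<bar>prob (cyl l 0 is1 \<inter> cyl l (j + m - 1) is2) - prob (cyl l 0 is1) * prob (cyl l 0 is2)\<bar>)"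

definition disc :: "nat \<Rightarrow> nat \<Rightarrow> nat \<Rightarrow> real" where
  "disc l n m = Max ((\<lambda>j. Hd l n m j) ` {1..n - m})"

definition Yavg :: "nat \<Rightarrow> (nat \<Rightarrow> real) set \<Rightarrow> nat \<Rightarrow> (nat \<Rightarrow> real) \<Rightarrow> real" where
  "Yavg L E t \<omega> = (\<Sum>i<t. indicator (blk L E i) \<omega>) / real t"

lemma Yavg_meas[measurable]: "E \<in> sets \<mu> \<Longrightarrow> Yavg L E t \<in> borel_measurable \<mu>"
  unfolding Yavg_def by simp

lemma Yavg_01: "0 \<le> Yavg L E t \<omega> \<and> Yavg L E t \<omega> \<le> 1"
proof (cases "t = 0")
  case True then show ?thesis unfolding Yavg_def by simp
next
  case False
  have "0 \<le> (\<Sum>i<t. indicator (blk L E i) \<omega> :: real)" by (rule sum_nonneg) simp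
  moreover have "(\<Sum>i<t. indicator (blk L E i) \<omega> :: real) \<le> (\<Sum>i<t. 1)"
    by (rule sum_mono) (simp add: indicator_def)
  ultimately show ?thesis using False unfolding Yavg_def by (auto simp: divide_le_eq)
qed

lemma beta_hat_eq:
  assumes "\<omega> \<in> space \<mu>" "m \<ge> 1"
  shows "beta_hat l t n \<omega> m = Max ((\<lambda>j. (1 / 2) * (\<Sum>is1\<in>Idx j l. \<Sum>is2\<in>Idx (n - m - j + 1) l.
      \<bar>Yavg n (cyl l 0 is1 \<inter> cyl l (j + m - 1) is2) t \<omega> - Yavg j (cyl l 0 is1) t \<omega> * Yavg (n - m - j + 1) (cyl l 0 is2) t \<omega>\<bar>)) ` {1..n - m})"
  unfolding beta_hat_def Let_def
proof (intro arg_cong[where f=Max] image_cong refl)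
  fix j assume j: "j \<in> {1..n - m}"
  show "1 / 2 * (\<Sum>A\<in>dcubes j l. \<Sum>B\<in>dcubes (n - m - j + 1) l. \<bar>emp_gamma t n m j \<omega> A B - emp_mu t j \<omega> A * emp_mu t (n - m - j + 1) \<omega> B\<bar>) =
    1 / 2 * (\<Sum>is1\<in>Idx j l. \<Sum>is2\<in>Idx (n - m - j + 1) l.
      \<bar>Yavg n (cyl l 0 is1 \<inter> cyl l (j + m - 1) is2) t \<omega> - Yavg j (cyl l 0 is1) t \<omega> * Yavg (n - m - j + 1) (cyl l 0 is2) t \<omega>\<bar>)"
    unfolding sum_dcubes
  proof (intro arg_cong[where f="\<lambda>x. 1 / 2 * x"] sum.cong refl)
    fix is1 is2 assume i1: "is1 \<in> Idx j l" and i2: "is2 \<in> Idx (n - m - j + 1) l"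
    have e: "j + m - 1 + (n - m - j + 1) = n" using j assms(2) by auto
    show "\<bar>emp_gamma t n m j \<omega> (cube l is1) (cube l is2) - emp_mu t j \<omega> (cube l is1) * emp_mu t (n - m - j + 1) \<omega> (cube l is2)\<bar> =
        \<bar>Yavg n (cyl l 0 is1 \<inter> cyl l (j + m - 1) is2) t \<omega> - Yavg j (cyl l 0 is1) t \<omega> * Yavg (n - m - j + 1) (cyl l 0 is2) t \<omega>\<bar>"
      unfolding Yavg_def emp_gamma_eq[OF assms(1) i1 i2 e assms(2)] emp_mu_eq[OF assms(1) i1] emp_mu_eq[OF assms(1) i2] ..
  qed
qed

end


lemma maxdiff:
  fixes f g :: "'a \<Rightarrow> real"
  assumes "finite S" "S \<noteq> {}" "\<And>x. x \<in> S \<Longrightarrow> \<bar>f x - g x\<bar> \<le> c"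
  shows "\<bar>Max (f ` S) - Max (g ` S)\<bar> \<le> c"
proof -
  have 1: "Max (f ` S) \<le> Max (g ` S) + c"
  proof (rule Max.boundedI)
    fix y assume "y \<in> f ` S"
    then obtain x where x: "x \<in> S" "y = f x" by auto
    have "g x \<le> Max (g ` S)" using x assms by auto
    then show "y \<le> Max (g ` S) + c" using assms(3)[OF x(1)] x by (auto simp: abs_le_iff)
  qed (use assms in auto)
  have 2: "Max (g ` S) \<le> Max (f ` S) + c"
  proof (rule Max.boundedI)
    fix y assume "y \<in> g ` S"
    then obtain x where x: "x \<in> S" "y = g x" by auto
    have "f x \<le> Max (f ` S)" using x assms by auto
    then show "y \<le> Max (f ` S) + c" using assms(3)[OF x(1)] x by (auto simp: abs_le_iff)
  qed (use assms in auto)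
  show ?thesis using 1 2 by (auto simp: abs_le_iff)
qed

lemma prod_diff:
  fixes a b c d :: real
  assumes "0 \<le> a" "a \<le> 1" "0 \<le> d" "d \<le> 1"
  shows "\<bar>a * b - c * d\<bar> \<le> \<bar>a - c\<bar> + \<bar>b - d\<bar>"
proof -
  have "a * b - c * d = a * (b - d) + d * (a - c)" by (simp add: algebra_simps)
  then have "\<bar>a * b - c * d\<bar> \<le> \<bar>a\<bar> * \<bar>b - d\<bar> + \<bar>d\<bar> * \<bar>a - c\<bar>" by (simp add: abs_mult[symmetric] abs_triangle_ineq)
  also have "\<dots> \<le> 1 * \<bar>b - d\<bar> + 1 * \<bar>a - c\<bar>" using assms by (intro add_mono mult_right_mono) auto
  finally show ?thesis by simp
qed

context stat begin

lemma stoch: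
  assumes summ: "summable (\<lambda>m. beta_coef \<mu> (Suc m))"
    and m: "m \<ge> 1" and n: "m < n" and t: "t \<ge> 1" and eta: "\<eta> > 0"
  shows "\<exists>B\<in>sets \<mu>. prob B \<le> 3 * real n * 2 ^ (l * n) * ((1 + 2 * (\<Sum>m. beta_coef \<mu> (Suc m))) / (real t * \<eta>\<^sup>2))
           \<and> (\<forall>\<omega>\<in>space \<mu> - B. \<bar>beta_hat l t n \<omega> m - disc l n m\<bar> \<le> 3 / 2 * \<eta> * 2 ^ (l * n))"
proof -
  define q where "q = (1 + 2 * (\<Sum>m. beta_coef \<mu> (Suc m))) / (real t * \<eta>\<^sup>2)"
  define jj where "jj j = n - m - j + 1" for j
  define G where "G j is1 is2 = cyl l 0 is1 \<inter> cyl l (j + m - 1) is2" for j is1 is2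
  define BG where "BG j is1 is2 = {\<omega>\<in>space \<mu>. \<eta> \<le> \<bar>Yavg n (G j is1 is2) t \<omega> - prob (G j is1 is2)\<bar>}" for j is1 is2
  define BM where "BM k ks = {\<omega>\<in>space \<mu>. \<eta> \<le> \<bar>Yavg k (cyl l 0 ks) t \<omega> - prob (cyl l 0 ks)\<bar>}" for k ks
  define Bj where "Bj j = (\<Union>p\<in>Idx j l \<times> Idx (jj j) l. BG j (fst p) (snd p)) \<union> (\<Union>is\<in>Idx j l. BM j is)
      \<union> (\<Union>is\<in>Idx (jj j) l. BM (jj j) is)" for j
  define B where "B = (\<Union>j\<in>{1..n - m}. Bj j)"
  have jjn: "j + m - 1 + jj j = n" if "j \<in> {1..n - m}" for j using that m unfolding jj_def by auto
  have jj1: "jj j \<ge> 1" for j unfolding jj_def by simp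
  have Ggen: "G j is1 is2 \<in> gen_sa \<mu> {0..<n}" if j: "j \<in> {1..n - m}" and i1: "is1 \<in> Idx j l" and i2: "is2 \<in> Idx (jj j) l" for j is1 is2
  proof -
    interpret S: sigma_algebra "space \<mu>" "gen_sa \<mu> {0..<n}" by (rule gen_sa_sigma)
    have "cyl l 0 is1 \<in> gen_sa \<mu> {0..<n}"
    proof -
      have "j \<le> n" using j by auto
      then show ?thesis using cyl_gen[OF i1, of 0] gen_sa_mono[of "{0..<j}" "{0..<n}"] by auto
    qed
    moreover have "cyl l (j + m - 1) is2 \<in> gen_sa \<mu> {0..<n}"
      using cyl_gen[OF i2, of "j + m - 1"] gen_sa_mono[of "{j + m - 1..<j + m - 1 + jj j}" "{0..<n}"] jjn[OF j] by auto
    ultimately show ?thesis unfolding G_def by auto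
  qed
  have Gs: "G j is1 is2 \<in> sets \<mu>" if "j \<in> {1..n - m}" "is1 \<in> Idx j l" "is2 \<in> Idx (jj j) l" for j is1 is2
    using Ggen[OF that] gen_sa_sub by blast
  have cyls: "cyl l 0 ks \<in> sets \<mu>" if "ks \<in> Idx k l" for k ks using cyl_sets[OF that] .
  have BGs: "BG j is1 is2 \<in> sets \<mu>" if "j \<in> {1..n - m}" "is1 \<in> Idx j l" "is2 \<in> Idx (jj j) l" for j is1 is2
    unfolding BG_def using Gs[OF that] by measurable
  have BMs: "BM k ks \<in> sets \<mu>" if "ks \<in> Idx k l" for k ks
    unfolding BM_def using cyls[OF that] by measurable
  have pBG: "prob (BG j is1 is2) \<le> q" if "j \<in> {1..n - m}" "is1 \<in> Idx j l" "is2 \<in> Idx (jj j) l" for j is1 is2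
    unfolding BG_def q_def Yavg_def using conc[OF summ Ggen[OF that] _ t eta] n by simp
  have pBM: "prob (BM k ks) \<le> q" if "ks \<in> Idx k l" "k \<ge> 1" for k ks
    unfolding BM_def q_def Yavg_def using conc[OF summ cyl_gen[OF that(1), of 0, simplified] that(2) t eta] by simp
  have cardI: "real (card (Idx k l)) \<le> 2 ^ (l * n)" if "k \<le> n" for k
  proof -
    have "(2::nat) ^ (l * k) \<le> 2 ^ (l * n)" using that by (intro power_increasing) auto
    then show ?thesis unfolding card_Idx by (metis of_nat_le_iff of_nat_numeral of_nat_power)
  qed
  have cardP: "real (card (Idx j l \<times> Idx (jj j) l)) \<le> 2 ^ (l * n)" if "j \<in> {1..n - m}" for j
  proof -
    have "card (Idx j l \<times> Idx (jj j) l) = 2 ^ (l * (j + jj j))"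
      unfolding card_cartesian_product card_Idx by (simp add: power_add distrib_left)
    moreover have "(2::nat) ^ (l * (j + jj j)) \<le> 2 ^ (l * n)" using jjn[OF that] m by (intro power_increasing) auto
    ultimately show ?thesis by (metis of_nat_le_iff of_nat_numeral of_nat_power)
  qed
  have tp: "0 < real t * \<eta>\<^sup>2" using t eta by simp
  have q0: "q \<ge> 0" unfolding q_def using summ tp by (auto intro!: divide_nonneg_pos suminf_nonneg beta_coef_nonneg add_nonneg_nonneg)
  have pBj: "prob (Bj j) \<le> 3 * 2 ^ (l * n) * q" if j: "j \<in> {1..n - m}" for j
  proof -
    have jn: "j \<le> n" "jj j \<le> n" using j jjn[OF j] by auto
    have s1: "(\<Union>p\<in>Idx j l \<times> Idx (jj j) l. BG j (fst p) (snd p)) \<in> sets \<mu>"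
      using BGs[OF j] finite_Idx by (intro sets.finite_UN) auto
    have s2: "(\<Union>is\<in>Idx j l. BM j is) \<in> sets \<mu>" using BMs finite_Idx by (intro sets.finite_UN) auto
    have s3: "(\<Union>is\<in>Idx (jj j) l. BM (jj j) is) \<in> sets \<mu>" using BMs finite_Idx by (intro sets.finite_UN) auto
    have "prob (Bj j) \<le> prob ((\<Union>p\<in>Idx j l \<times> Idx (jj j) l. BG j (fst p) (snd p)) \<union> (\<Union>is\<in>Idx j l. BM j is))
         + prob (\<Union>is\<in>Idx (jj j) l. BM (jj j) is)"
      unfolding Bj_def using s1 s2 s3 by (intro measure_Un_le) auto
    also have "\<dots> \<le> prob (\<Union>p\<in>Idx j l \<times> Idx (jj j) l. BG j (fst p) (snd p)) + prob (\<Union>is\<in>Idx j l. BM j is)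
         + prob (\<Union>is\<in>Idx (jj j) l. BM (jj j) is)"
      using s1 s2 by (simp add: measure_Un_le)
    also have "\<dots> \<le> (\<Sum>p\<in>Idx j l \<times> Idx (jj j) l. prob (BG j (fst p) (snd p))) + (\<Sum>is\<in>Idx j l. prob (BM j is))
         + (\<Sum>is\<in>Idx (jj j) l. prob (BM (jj j) is))"
      using BGs[OF j] BMs finite_Idx
      by (intro add_mono measure_UNION_le) (auto simp: finite_cartesian_product)
    also have "\<dots> \<le> (\<Sum>p\<in>Idx j l \<times> Idx (jj j) l. q) + (\<Sum>is\<in>Idx j l. q) + (\<Sum>is\<in>Idx (jj j) l. q)"
      using pBG[OF j] pBM j jj1 by (intro add_mono sum_mono) auto
    also have "\<dots> = real (card (Idx j l \<times> Idx (jj j) l)) * q + real (card (Idx j l)) * q + real (card (Idx (jj j) l)) * q"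
      by simp
    also have "\<dots> \<le> 2 ^ (l * n) * q + 2 ^ (l * n) * q + 2 ^ (l * n) * q"
      using cardP[OF j] cardI[OF jn(1)] cardI[OF jn(2)] q0 by (intro add_mono mult_right_mono) auto
    finally show ?thesis by (simp add: algebra_simps)
  qed
  have Bjs: "Bj j \<in> sets \<mu>" if j: "j \<in> {1..n - m}" for j
    unfolding Bj_def using BGs[OF j] BMs finite_Idx by (intro sets.Un sets.finite_UN) auto
  have Bs: "B \<in> sets \<mu>" unfolding B_def using Bjs by auto
  have "prob B \<le> (\<Sum>j\<in>{1..n - m}. prob (Bj j))" unfolding B_def using Bjs by (intro measure_UNION_le) auto
  also have "\<dots> \<le> (\<Sum>j\<in>{1..n - m}. 3 * 2 ^ (l * n) * q)" using pBj by (rule sum_mono)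
  also have "\<dots> = real (n - m) * (3 * 2 ^ (l * n) * q)" by simp
  also have "\<dots> \<le> real n * (3 * 2 ^ (l * n) * q)" using q0 by (intro mult_right_mono) auto
  finally have pB: "prob B \<le> 3 * real n * 2 ^ (l * n) * q" by simp
  have det: "\<bar>beta_hat l t n \<omega> m - disc l n m\<bar> \<le> 3 / 2 * \<eta> * 2 ^ (l * n)" if w: "\<omega> \<in> space \<mu> - B" for \<omega>
  proof -
    have ws: "\<omega> \<in> space \<mu>" using w by simp
    show ?thesis unfolding beta_hat_eq[OF ws m] disc_def
    proof (rule maxdiff)
      fix j assume j: "j \<in> {1..n - m}"
      have nb: "\<omega> \<notin> Bj j" using w j unfolding B_def by auto
      let ?f = "\<lambda>is1 is2. \<bar>Yavg n (cyl l 0 is1 \<inter> cyl l (j + m - 1) is2) t \<omega> - Yavg j (cyl l 0 is1) t \<omega> * Yavg (n - m - j + 1) (cyl l 0 is2) t \<omega>\<bar>"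
      let ?g = "\<lambda>is1 is2. \<bar>prob (cyl l 0 is1 \<inter> cyl l (j + m - 1) is2) - prob (cyl l 0 is1) * prob (cyl l 0 is2)\<bar>"
      have pt: "\<bar>?f is1 is2 - ?g is1 is2\<bar> \<le> 3 * \<eta>" if i1: "is1 \<in> Idx j l" and i2: "is2 \<in> Idx (jj j) l" for is1 is2
      proof -
        have a: "\<bar>Yavg n (G j is1 is2) t \<omega> - prob (G j is1 is2)\<bar> < \<eta>"
          using nb i1 i2 ws unfolding Bj_def BG_def by force
        have b: "\<bar>Yavg j (cyl l 0 is1) t \<omega> - prob (cyl l 0 is1)\<bar> < \<eta>"
          using nb i1 ws unfolding Bj_def BM_def by force
        have c: "\<bar>Yavg (jj j) (cyl l 0 is2) t \<omega> - prob (cyl l 0 is2)\<bar> < \<eta>"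
          using nb i2 ws unfolding Bj_def BM_def by force
        have "\<bar>?f is1 is2 - ?g is1 is2\<bar> \<le> \<bar>(Yavg n (G j is1 is2) t \<omega> - Yavg j (cyl l 0 is1) t \<omega> * Yavg (jj j) (cyl l 0 is2) t \<omega>)
               - (prob (G j is1 is2) - prob (cyl l 0 is1) * prob (cyl l 0 is2))\<bar>"
          unfolding G_def jj_def by (rule abs_triangle_ineq3)
        also have "\<dots> \<le> \<bar>Yavg n (G j is1 is2) t \<omega> - prob (G j is1 is2)\<bar>
             + \<bar>Yavg j (cyl l 0 is1) t \<omega> * Yavg (jj j) (cyl l 0 is2) t \<omega> - prob (cyl l 0 is1) * prob (cyl l 0 is2)\<bar>"
          by linarith
        also have "\<bar>Yavg j (cyl l 0 is1) t \<omega> * Yavg (jj j) (cyl l 0 is2) t \<omega> - prob (cyl l 0 is1) * prob (cyl l 0 is2)\<bar>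
             \<le> \<bar>Yavg j (cyl l 0 is1) t \<omega> - prob (cyl l 0 is1)\<bar> + \<bar>Yavg (jj j) (cyl l 0 is2) t \<omega> - prob (cyl l 0 is2)\<bar>"
          using Yavg_01[of j "cyl l 0 is1" t \<omega>] by (intro prod_diff) auto
        finally show ?thesis using a b c by linarith
      qed
      have "\<bar>1 / 2 * (\<Sum>is1\<in>Idx j l. \<Sum>is2\<in>Idx (jj j) l. ?f is1 is2) - 1 / 2 * (\<Sum>is1\<in>Idx j l. \<Sum>is2\<in>Idx (jj j) l. ?g is1 is2)\<bar>
          = 1 / 2 * \<bar>(\<Sum>is1\<in>Idx j l. \<Sum>is2\<in>Idx (jj j) l. ?f is1 is2 - ?g is1 is2)\<bar>"
      proof -
        have h: "\<bar>1 / 2 * A - 1 / 2 * B\<bar> = 1 / 2 * \<bar>A - B\<bar>" for A B :: real by (auto simp: abs_if)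
        have e: "(\<Sum>is1\<in>Idx j l. \<Sum>is2\<in>Idx (jj j) l. ?f is1 is2) - (\<Sum>is1\<in>Idx j l. \<Sum>is2\<in>Idx (jj j) l. ?g is1 is2)
              = (\<Sum>is1\<in>Idx j l. \<Sum>is2\<in>Idx (jj j) l. ?f is1 is2 - ?g is1 is2)"
          by (simp add: sum_subtractf)
        show ?thesis unfolding h e ..
      qed
      also have "\<dots> \<le> 1 / 2 * (\<Sum>is1\<in>Idx j l. \<Sum>is2\<in>Idx (jj j) l. 3 * \<eta>)"
      proof -
        have "\<bar>(\<Sum>is1\<in>Idx j l. \<Sum>is2\<in>Idx (jj j) l. ?f is1 is2 - ?g is1 is2)\<bar>
              \<le> (\<Sum>is1\<in>Idx j l. \<bar>\<Sum>is2\<in>Idx (jj j) l. ?f is1 is2 - ?g is1 is2\<bar>)" by (rule sum_abs)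
        also have "\<dots> \<le> (\<Sum>is1\<in>Idx j l. \<Sum>is2\<in>Idx (jj j) l. \<bar>?f is1 is2 - ?g is1 is2\<bar>)"
          by (intro sum_mono sum_abs)
        also have "\<dots> \<le> (\<Sum>is1\<in>Idx j l. \<Sum>is2\<in>Idx (jj j) l. 3 * \<eta>)"
          using pt by (intro sum_mono) auto
        finally show ?thesis by simp
      qed
      also have "\<dots> = 3 / 2 * \<eta> * real (card (Idx j l \<times> Idx (jj j) l))"
        unfolding card_cartesian_product by simp
      also have "\<dots> \<le> 3 / 2 * \<eta> * 2 ^ (l * n)" using cardP[OF j] eta by (intro mult_left_mono) auto
      finally show "\<bar>1 / 2 * (\<Sum>is1\<in>Idx j l. \<Sum>is2\<in>Idx (n - m - j + 1) l. ?f is1 is2) - Hd l n m j\<bar> \<le> 3 / 2 * \<eta> * 2 ^ (l * n)"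
        unfolding Hd_def jj_def by simp
    qed (use n in auto)
  qed
  show ?thesis using Bs pB det unfolding q_def by blast
qed

end


lemma sum_pos_neg:
  fixes d :: "'k \<Rightarrow> real"
  assumes "finite K" "(\<Sum>k\<in>K. d k) = 0"
  shows "(\<Sum>k\<in>{k\<in>K. d k > 0}. d k) = (1 / 2) * (\<Sum>k\<in>K. \<bar>d k\<bar>)"
    and "(\<Sum>k\<in>{k\<in>K. d k \<le> 0}. d k) = - (1 / 2) * (\<Sum>k\<in>K. \<bar>d k\<bar>)"
proof -
  let ?P = "{k\<in>K. d k > 0}" and ?N = "{k\<in>K. d k \<le> 0}"
  have KPN: "K = ?P \<union> ?N" "?P \<inter> ?N = {}" by auto
  have f: "finite ?P" "finite ?N" using assms by auto
  have s: "(\<Sum>k\<in>K. d k) = (\<Sum>k\<in>?P. d k) + (\<Sum>k\<in>?N. d k)"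
    by (subst KPN(1), rule sum.union_disjoint[OF f KPN(2)])
  have "(\<Sum>k\<in>K. \<bar>d k\<bar>) = (\<Sum>k\<in>?P. \<bar>d k\<bar>) + (\<Sum>k\<in>?N. \<bar>d k\<bar>)"
    by (subst KPN(1), rule sum.union_disjoint[OF f KPN(2)])
  also have "(\<Sum>k\<in>?P. \<bar>d k\<bar>) = (\<Sum>k\<in>?P. d k)" by (rule sum.cong) auto
  also have "(\<Sum>k\<in>?N. \<bar>d k\<bar>) = - (\<Sum>k\<in>?N. d k)" by (subst sum_negf[symmetric], rule sum.cong) auto
  finally have a: "(\<Sum>k\<in>K. \<bar>d k\<bar>) = (\<Sum>k\<in>?P. d k) - (\<Sum>k\<in>?N. d k)" by simp
  show "(\<Sum>k\<in>?P. d k) = (1 / 2) * (\<Sum>k\<in>K. \<bar>d k\<bar>)" using a s assms(2) by linarith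
  show "(\<Sum>k\<in>?N. d k) = - (1 / 2) * (\<Sum>k\<in>K. \<bar>d k\<bar>)" using a s assms(2) by linarith
qed

lemma sub_sum_bound:
  fixes d :: "'k \<Rightarrow> real"
  assumes "finite K" "(\<Sum>k\<in>K. d k) = 0" "K' \<subseteq> K"
  shows "\<bar>\<Sum>k\<in>K'. d k\<bar> \<le> (1 / 2) * (\<Sum>k\<in>K. \<bar>d k\<bar>)"
proof -
  have fK': "finite K'" using assms finite_subset by blast
  have "(\<Sum>k\<in>K'. d k) \<le> (\<Sum>k\<in>{k\<in>K'. d k > 0}. d k)"
  proof -
    have "K' = {k\<in>K'. d k > 0} \<union> {k\<in>K'. d k \<le> 0}" by auto
    then have "(\<Sum>k\<in>K'. d k) = (\<Sum>k\<in>{k\<in>K'. d k > 0}. d k) + (\<Sum>k\<in>{k\<in>K'. d k \<le> 0}. d k)"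
      using fK' by (metis (no_types, lifting) sum.union_inter_neutral[of "{k\<in>K'. d k > 0}" "{k\<in>K'. d k \<le> 0}"] finite_subset mem_Collect_eq
          Int_iff not_le subsetI empty_iff)
    moreover have "(\<Sum>k\<in>{k\<in>K'. d k \<le> 0}. d k) \<le> 0" by (rule sum_nonpos) auto
    ultimately show ?thesis by linarith
  qed
  also have "\<dots> \<le> (\<Sum>k\<in>{k\<in>K. d k > 0}. d k)"
    using assms by (intro sum_mono2) auto
  also have "\<dots> = (1 / 2) * (\<Sum>k\<in>K. \<bar>d k\<bar>)" using sum_pos_neg(1)[OF assms(1,2)] .
  finally have up: "(\<Sum>k\<in>K'. d k) \<le> (1 / 2) * (\<Sum>k\<in>K. \<bar>d k\<bar>)" .
  have "(\<Sum>k\<in>K'. d k) \<ge> (\<Sum>k\<in>{k\<in>K'. d k \<le> 0}. d k)"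
  proof -
    have "K' = {k\<in>K'. d k > 0} \<union> {k\<in>K'. d k \<le> 0}" by auto
    then have "(\<Sum>k\<in>K'. d k) = (\<Sum>k\<in>{k\<in>K'. d k > 0}. d k) + (\<Sum>k\<in>{k\<in>K'. d k \<le> 0}. d k)"
      using fK' by (metis (no_types, lifting) sum.union_inter_neutral[of "{k\<in>K'. d k > 0}" "{k\<in>K'. d k \<le> 0}"] finite_subset mem_Collect_eq
          Int_iff not_le subsetI empty_iff)
    moreover have "(\<Sum>k\<in>{k\<in>K'. d k > 0}. d k) \<ge> 0" by (rule sum_nonneg) auto
    ultimately show ?thesis by linarith
  qed
  moreover have "(\<Sum>k\<in>{k\<in>K'. d k \<le> 0}. d k) \<ge> (\<Sum>k\<in>{k\<in>K. d k \<le> 0}. d k)"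
  proof -
    have "{k\<in>K. d k \<le> 0} = {k\<in>K'. d k \<le> 0} \<union> {k\<in>K - K'. d k \<le> 0}" using assms(3) by auto
    then have "(\<Sum>k\<in>{k\<in>K. d k \<le> 0}. d k) = (\<Sum>k\<in>{k\<in>K'. d k \<le> 0}. d k) + (\<Sum>k\<in>{k\<in>K - K'. d k \<le> 0}. d k)"
      using assms(1) fK' by (subst sum.union_disjoint[symmetric]) auto
    moreover have "(\<Sum>k\<in>{k\<in>K - K'. d k \<le> 0}. d k) \<le> 0" by (rule sum_nonpos) auto
    ultimately show ?thesis by linarith
  qed
  moreover have "(\<Sum>k\<in>{k\<in>K. d k \<le> 0}. d k) = - (1 / 2) * (\<Sum>k\<in>K. \<bar>d k\<bar>)" using sum_pos_neg(2)[OF assms(1,2)] .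
  ultimately show ?thesis using up by (auto simp: abs_le_iff)
qed

locale two_prob =
  fixes P Q :: "'a measure" and K :: "'k set" and C :: "'k \<Rightarrow> 'a set"
  assumes P: "prob_space P" and Q: "prob_space Q" and sQ: "sets Q = sets P"
    and fK: "finite K" and CP: "\<And>k. k \<in> K \<Longrightarrow> C k \<in> sets P"
    and disj: "disjoint_family_on C K" and cover: "(\<Union>k\<in>K. C k) = space P"
begin

interpretation P: prob_space P by (rule P)
interpretation Q: prob_space Q by (rule Q)

lemma spQ: "space Q = space P" using sets_eq_imp_space_eq[OF sQ] .

lemma meas_union: "K' \<subseteq> K \<Longrightarrow> measure P (\<Union>k\<in>K'. C k) - measure Q (\<Union>k\<in>K'. C k) = (\<Sum>k\<in>K'. measure P (C k) - measure Q (C k))"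
proof -
  assume K': "K' \<subseteq> K"
  have f: "finite K'" using K' fK finite_subset by blast
  have d: "disjoint_family_on C K'" using disj K' disjoint_family_on_mono by blast
  have "measure P (\<Union>k\<in>K'. C k) = (\<Sum>k\<in>K'. measure P (C k))"
    using CP K' by (intro P.finite_measure_finite_Union[OF f _ d]) auto
  moreover have "measure Q (\<Union>k\<in>K'. C k) = (\<Sum>k\<in>K'. measure Q (C k))"
    using CP K' sQ by (intro Q.finite_measure_finite_Union[OF f _ d]) auto
  ultimately show ?thesis by (simp add: sum_subtractf)
qed

lemma sum_zero: "(\<Sum>k\<in>K. measure P (C k) - measure Q (C k)) = 0"
proof -
  have "measure Q (space P) = 1" using spQ Q.prob_space by simp
  then show ?thesis using meas_union[of K] cover by (simp add: P.prob_space)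
qed

lemma union_bound: "K' \<subseteq> K \<Longrightarrow> \<bar>measure P (\<Union>k\<in>K'. C k) - measure Q (\<Union>k\<in>K'. C k)\<bar> \<le> (1 / 2) * (\<Sum>k\<in>K. \<bar>measure P (C k) - measure Q (C k)\<bar>)"
  using meas_union sub_sum_bound[OF fK sum_zero] by simp

lemma attained: "measure P (\<Union>k\<in>{k\<in>K. measure P (C k) - measure Q (C k) > 0}. C k) - measure Q (\<Union>k\<in>{k\<in>K. measure P (C k) - measure Q (C k) > 0}. C k)
   = (1 / 2) * (\<Sum>k\<in>K. \<bar>measure P (C k) - measure Q (C k)\<bar>)"
  using meas_union[of "{k\<in>K. measure P (C k) - measure Q (C k) > 0}"] sum_pos_neg(1)[OF fK sum_zero] by simp

end


lemma idx_meas[measurable]: "idx l \<in> measurable borel (count_space UNIV)"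
proof -
  have "(\<lambda>x::real. \<lfloor>x * 2 ^ l\<rfloor>) \<in> measurable borel (count_space UNIV)"
    by (rule measurable_compose[OF _ measurable_real_floor]) simp
  then show ?thesis unfolding idx_def by (rule measurable_compose) simp
qed

lemma idxset_borel: "{x. idx l x \<in> S} \<in> sets borel"
proof -
  have "idx l -` S \<inter> space borel \<in> sets borel" using idx_meas by (rule measurable_sets) simp
  then show ?thesis by (simp add: vimage_def)
qed

lemma idx_bounds:
  assumes "0 \<le> x" "x \<le> 1"
  shows "real (idx l x) \<le> x * 2 ^ l" "x * 2 ^ l \<le> real (idx l x) + 1"
proof -
  have fl: "\<lfloor>x * 2 ^ l\<rfloor> \<ge> 0" using assms by simp
  have a: "real (nat \<lfloor>x * 2 ^ l\<rfloor>) \<le> x * 2 ^ l" using fl by simp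
  have b: "x * 2 ^ l < real (nat \<lfloor>x * 2 ^ l\<rfloor>) + 1" using fl by linarith
  have c: "x * 2 ^ l \<le> 2 ^ l" using assms by simp
  have d: "real ((2::nat) ^ l - 1) = 2 ^ l - 1" by (simp add: of_nat_diff)
  have "idx l x \<le> nat \<lfloor>x * 2 ^ l\<rfloor>" unfolding idx_def by simp
  then have "real (idx l x) \<le> real (nat \<lfloor>x * 2 ^ l\<rfloor>)" by (simp only: of_nat_le_iff)
  then show "real (idx l x) \<le> x * 2 ^ l" using a by linarith
  show "x * 2 ^ l \<le> real (idx l x) + 1"
    unfolding idx_def using b c d by (auto simp: min_def not_le)
qed

lemma idx_refine_set:
  assumes "l \<le> l'"
  shows "{x. idx l x \<in> S} = {x. idx l' x \<in> {k. k div 2 ^ (l' - l) \<in> S}}"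
  using idx_refine[OF assms] by auto

context stat begin

abbreviation nu where "nu t \<equiv> distr \<mu> borel (\<lambda>\<omega>. \<omega> t)"

lemma nu_prob: "prob_space (nu t)" by (rule prob_space_distr) simp

lemma nu_out: "measure (nu t) (UNIV - {0..1}) = 0"
proof -
  have "measure (nu t) (UNIV - {0..1}) = prob ((\<lambda>\<omega>. \<omega> t) -` (UNIV - {0..1}) \<inter> space \<mu>)"
    by (rule measure_distr) auto
  also have "(\<lambda>\<omega>. \<omega> t) -` (UNIV - {0..1}) \<inter> space \<mu> = {}" using space_mu by auto
  finally show ?thesis by simp
qed

definition idxF where "idxF = {{x. idx l x \<in> S} | l S. True}"

lemma real_apx:
  assumes A: "A \<in> sets borel"
  shows "apx (nu t) (nu t) idxF A"
proof -
  interpret N: prob_space "nu t" by (rule nu_prob)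
  have spN: "space (nu t) = UNIV" by simp
  have sA: "A \<in> sigma_sets (space (nu t)) (range lessThan)"
    using A unfolding spN borel_Iio by (simp add: sets_measure_of)
  show ?thesis
  proof (rule approx_sigma_sets[OF _ _ refl _ _ _ _ _ _ sA])
    show "finite_measure (nu t)" by (rule N.finite_measure_axioms)
    show "finite_measure (nu t)" by (rule N.finite_measure_axioms)
    show "idxF \<subseteq> sets (nu t)" unfolding idxF_def using idxset_borel by auto
    show "{} \<in> idxF" unfolding idxF_def by (auto intro!: exI[of _ "{}"])
    show "space (nu t) - R \<in> idxF" if "R \<in> idxF" for R
    proof -
      obtain l S where "R = {x. idx l x \<in> S}" using \<open>R \<in> idxF\<close> unfolding idxF_def by auto
      then have "space (nu t) - R = {x. idx l x \<in> - S}" by auto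
      then show ?thesis unfolding idxF_def by blast
    qed
    show "R1 \<union> R2 \<in> idxF" if "R1 \<in> idxF" "R2 \<in> idxF" for R1 R2
    proof -
      obtain l1 S1 where 1: "R1 = {x. idx l1 x \<in> S1}" using \<open>R1 \<in> idxF\<close> unfolding idxF_def by auto
      obtain l2 S2 where 2: "R2 = {x. idx l2 x \<in> S2}" using \<open>R2 \<in> idxF\<close> unfolding idxF_def by auto
      let ?l = "max l1 l2"
      have "R1 \<union> R2 = {x. idx ?l x \<in> {k. k div 2 ^ (?l - l1) \<in> S1} \<union> {k. k div 2 ^ (?l - l2) \<in> S2}}"
      proof -
        have e1: "R1 = {x. idx ?l x \<in> {k. k div 2 ^ (?l - l1) \<in> S1}}" using 1 idx_refine_set[of l1 ?l S1] by simp
        have e2: "R2 = {x. idx ?l x \<in> {k. k div 2 ^ (?l - l2) \<in> S2}}" using 2 idx_refine_set[of l2 ?l S2] by simp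
        show ?thesis unfolding e1 e2 by auto
      qed
      then show ?thesis unfolding idxF_def by blast
    qed
    show "range lessThan \<subseteq> sets (nu t)" by auto
    show "apx (nu t) (nu t) idxF g" if "g \<in> range lessThan" for g
    proof -
      obtain r where g: "g = {..<r}" using \<open>g \<in> range lessThan\<close> by auto
      define D where "D l = {r - 1 / 2 ^ l..<r}" for l :: nat
      have Ds: "range D \<subseteq> sets (nu t)" unfolding D_def by auto
      have decD: "decseq D" unfolding decseq_def D_def
      proof (intro allI impI subsetI)
        fix a b :: nat and x assume ab: "a \<le> b" and x: "x \<in> {r - 1 / 2 ^ b..<r}"
        have "(1::real) / 2 ^ b \<le> 1 / 2 ^ a" using ab by (intro divide_left_mono power_increasing) auto
        then show "x \<in> {r - 1 / 2 ^ a..<r}" using x by auto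
      qed
      have ID: "(\<Inter>i. D i) = {}"
      proof (rule ccontr)
        assume "(\<Inter>i. D i) \<noteq> {}"
        then obtain x where x: "\<And>i. x \<in> D i" by auto
        then have xr: "x < r" unfolding D_def by auto
        obtain n where n: "(1/2::real) ^ n < r - x" using real_arch_pow_inv[of "r - x" "1/2"] xr by auto
        have "x \<in> D n" using x by simp
        then show False using n unfolding D_def by (simp add: power_one_over)
      qed
      have limD: "(\<lambda>l. measure (nu t) (D l)) \<longlonglongrightarrow> 0"
        using N.finite_Lim_measure_decseq[OF Ds decD] ID by simp
      show ?thesis unfolding apx_def
      proof (intro allI impI)
        fix e :: real assume e: "e > 0"
        obtain l where l: "measure (nu t) (D l) < e / 2"
          using limD e unfolding lim_sequentially by (metis abs_of_nonneg diff_zero measure_nonneg half_gt_zero dist_real_def order_refl)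
        define R where "R = {x. idx l x \<in> {k. real k + 1 < r * 2 ^ l}}"
        have RF: "R \<in> idxF" unfolding R_def idxF_def by blast
        have sub: "g - R \<union> (R - g) \<subseteq> (UNIV - {0..1}) \<union> D l"
        proof
          fix x assume x: "x \<in> g - R \<union> (R - g)"
          show "x \<in> (UNIV - {0..1}) \<union> D l"
          proof (cases "x \<in> {0..1}")
            case False then show ?thesis by simp
          next
            case True
            then have b1: "real (idx l x) \<le> x * 2 ^ l" and b2: "x * 2 ^ l \<le> real (idx l x) + 1"
              using idx_bounds by auto
            have p: "(2::real) ^ l > 0" by simp
            show ?thesis
            proof (cases "x \<in> g")
              case True
              then have "x \<notin> R" "x < r" using x g by auto
              then have "r * 2 ^ l \<le> real (idx l x) + 1" unfolding R_def by auto
              then have "r * 2 ^ l \<le> x * 2 ^ l + 1" using b1 by linarith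
              then have "r - 1 / 2 ^ l \<le> x" using p by (simp add: field_simps)
              then show ?thesis unfolding D_def using \<open>x < r\<close> by simp
            next
              case False
              then have "x \<in> R" "r \<le> x" using x g by auto
              then have "real (idx l x) + 1 < r * 2 ^ l" unfolding R_def by auto
              then have "x * 2 ^ l < r * 2 ^ l" using b2 by linarith
              then have False using \<open>r \<le> x\<close> p by simp
              then show ?thesis ..
            qed
          qed
        qed
        have Rs: "R \<in> sets borel" unfolding R_def by (rule idxset_borel)
        have "measure (nu t) (g - R \<union> (R - g)) \<le> measure (nu t) ((UNIV - {0..1}) \<union> D l)"
          using sub Rs g unfolding D_def by (intro N.finite_measure_mono) auto
        also have "\<dots> \<le> measure (nu t) (UNIV - {0..1}) + measure (nu t) (D l)"
          unfolding D_def by (intro measure_Un_le) auto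
        also have "\<dots> < e / 2" using nu_out l by simp
        finally show "\<exists>R\<in>idxF. measure (nu t) (g - R \<union> (R - g)) + measure (nu t) (g - R \<union> (R - g)) < e"
          using RF by (intro bexI[of _ R]) auto
      qed
    qed
  qed
qed

end


context stat begin

definition cv :: "nat \<Rightarrow> nat \<Rightarrow> nat \<Rightarrow> (nat \<Rightarrow> real) \<Rightarrow> nat list" where
  "cv l a k \<omega> = map (idx l) (map \<omega> [a..<a + k])"

definition detset :: "nat \<Rightarrow> nat \<Rightarrow> nat \<Rightarrow> nat list set \<Rightarrow> (nat \<Rightarrow> real) set" where
  "detset l a k S = {\<omega>\<in>space \<mu>. cv l a k \<omega> \<in> S}"

lemma cv_coarse:
  assumes "l0 \<le> l" "k0 \<le> k"
  shows "cv l0 a k0 \<omega> = map (\<lambda>x. x div 2 ^ (l - l0)) (take k0 (cv l a k \<omega>))"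
proof -
  have "take k0 [a..<a + k] = [a..<a + k0]" using assms(2) by (simp add: take_upt min_def)
  then show ?thesis unfolding cv_def using idx_refine[OF assms(1)] by (simp add: take_map)
qed

lemma detset_refine:
  assumes "l0 \<le> l" "k0 \<le> k"
  shows "detset l0 a k0 S = detset l a k {xs. map (\<lambda>x. x div 2 ^ (l - l0)) (take k0 xs) \<in> S}"
  unfolding detset_def using cv_coarse[OF assms] by auto

lemma cv_Idx: "cv l a k \<omega> \<in> Idx k l"
  unfolding cv_def Idx_def using idx_lt by auto

lemma cyl_cv: "is \<in> Idx k l \<Longrightarrow> cyl l a is = {\<omega>\<in>space \<mu>. cv l a k \<omega> = is}"
  unfolding cyl_def cv_def Idx_def by auto

lemma detset_union: "detset l a k S = (\<Union>is\<in>Idx k l \<inter> S. cyl l a is)"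
proof
  show "detset l a k S \<subseteq> (\<Union>is\<in>Idx k l \<inter> S. cyl l a is)"
  proof
    fix x assume "x \<in> detset l a k S"
    then have x: "x \<in> space \<mu>" "cv l a k x \<in> S" unfolding detset_def by auto
    then have "x \<in> cyl l a (cv l a k x)" using cyl_cv[OF cv_Idx] by auto
    then show "x \<in> (\<Union>is\<in>Idx k l \<inter> S. cyl l a is)" using x cv_Idx by blast
  qed
  show "(\<Union>is\<in>Idx k l \<inter> S. cyl l a is) \<subseteq> detset l a k S"
    unfolding detset_def using cyl_cv by auto
qed

lemma detset_gen: "detset l a k S \<in> gen_sa \<mu> {a..<a + k}"
proof -
  interpret G: sigma_algebra "space \<mu>" "gen_sa \<mu> {a..<a + k}" by (rule gen_sa_sigma)
  show ?thesis unfolding detset_union using finite_Idx cyl_gen by (intro G.finite_UN) auto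
qed

lemma detset_sets: "detset l a k S \<in> sets \<mu>" using detset_gen gen_sa_sub by blast

definition detF :: "nat \<Rightarrow> (nat \<Rightarrow> bool) \<Rightarrow> (nat \<Rightarrow> real) set set" where
  "detF a P = {detset l a k S | l k S. P k}"

lemma coord_apx:
  assumes A: "A \<in> sets borel" and e: "e > 0"
  shows "\<exists>l S. 2 * prob ((\<lambda>\<omega>. \<omega> t) -` A \<inter> space \<mu> - {\<omega>\<in>space \<mu>. idx l (\<omega> t) \<in> S}
      \<union> ({\<omega>\<in>space \<mu>. idx l (\<omega> t) \<in> S} - (\<lambda>\<omega>. \<omega> t) -` A \<inter> space \<mu>)) < e"
proof -
  obtain R where R: "R \<in> idxF" "measure (nu t) (A - R \<union> (R - A)) + measure (nu t) (A - R \<union> (R - A)) < e"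
    using real_apx[OF A] e unfolding apx_def by blast
  obtain l S where RS: "R = {x. idx l x \<in> S}" using R(1) unfolding idxF_def by auto
  have Rb: "R \<in> sets borel" unfolding RS by (rule idxset_borel)
  have "measure (nu t) (A - R \<union> (R - A)) = prob ((\<lambda>\<omega>. \<omega> t) -` (A - R \<union> (R - A)) \<inter> space \<mu>)"
    using A Rb by (intro measure_distr) auto
  also have "(\<lambda>\<omega>. \<omega> t) -` (A - R \<union> (R - A)) \<inter> space \<mu> = (\<lambda>\<omega>. \<omega> t) -` A \<inter> space \<mu> - {\<omega>\<in>space \<mu>. idx l (\<omega> t) \<in> S}
      \<union> ({\<omega>\<in>space \<mu>. idx l (\<omega> t) \<in> S} - (\<lambda>\<omega>. \<omega> t) -` A \<inter> space \<mu>)" unfolding RS by auto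
  finally show ?thesis using R(2) by (intro exI[of _ l] exI[of _ S]) simp
qed

lemma apx1:
  assumes W: "W \<in> gen_sa \<mu> I"
    and hP: "\<And>t. t \<in> I \<Longrightarrow> \<exists>k. P k \<and> a \<le> t \<and> t < a + k"
    and Pmax: "\<And>k1 k2. P k1 \<Longrightarrow> P k2 \<Longrightarrow> P (max k1 k2)"
    and Pne: "P k0"
  shows "apx \<mu> \<mu> (detF a P) W"
proof -
  let ?G = "(\<Union>t\<in>I. {(\<lambda>\<omega>. \<omega> t) -` A \<inter> space \<mu> | A. A \<in> sets borel})"
  have sW: "W \<in> sigma_sets (space \<mu>) ?G" using W unfolding gen_sa_def .
  show ?thesis
  proof (rule approx_sigma_sets[OF _ _ refl _ _ _ _ _ _ sW])
    show "finite_measure \<mu>" by (rule finite_measure_axioms)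
    show "finite_measure \<mu>" by (rule finite_measure_axioms)
    show "detF a P \<subseteq> sets \<mu>" unfolding detF_def using detset_sets by auto
    show "{} \<in> detF a P" unfolding detF_def detset_def using Pne by (auto intro!: exI[of _ "{}"])
    show "space \<mu> - R \<in> detF a P" if "R \<in> detF a P" for R
    proof -
      obtain l k S where "R = detset l a k S" "P k" using \<open>R \<in> detF a P\<close> unfolding detF_def by auto
      moreover have "space \<mu> - detset l a k S = detset l a k (- S)" unfolding detset_def by auto
      ultimately show ?thesis unfolding detF_def by blast
    qed
    show "R1 \<union> R2 \<in> detF a P" if "R1 \<in> detF a P" "R2 \<in> detF a P" for R1 R2
    proof -
      obtain l1 k1 S1 where 1: "R1 = detset l1 a k1 S1" "P k1" using \<open>R1 \<in> detF a P\<close> unfolding detF_def by auto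
      obtain l2 k2 S2 where 2: "R2 = detset l2 a k2 S2" "P k2" using \<open>R2 \<in> detF a P\<close> unfolding detF_def by auto
      let ?l = "max l1 l2" and ?k = "max k1 k2"
      have e1: "R1 = detset ?l a ?k {xs. map (\<lambda>x. x div 2 ^ (?l - l1)) (take k1 xs) \<in> S1}"
        using 1 detset_refine[of l1 ?l k1 ?k a S1] by simp
      have e2: "R2 = detset ?l a ?k {xs. map (\<lambda>x. x div 2 ^ (?l - l2)) (take k2 xs) \<in> S2}"
        using 2 detset_refine[of l2 ?l k2 ?k a S2] by simp
      have "R1 \<union> R2 = detset ?l a ?k ({xs. map (\<lambda>x. x div 2 ^ (?l - l1)) (take k1 xs) \<in> S1} \<union> {xs. map (\<lambda>x. x div 2 ^ (?l - l2)) (take k2 xs) \<in> S2})"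
        unfolding e1 e2 detset_def by auto
      then show ?thesis unfolding detF_def using Pmax[OF 1(2) 2(2)] by blast
    qed
    show "?G \<subseteq> sets \<mu>" by (rule gen_gens_sub)
    show "apx \<mu> \<mu> (detF a P) g" if "g \<in> ?G" for g
    proof -
      obtain t A where tA: "t \<in> I" "A \<in> sets borel" "g = (\<lambda>\<omega>. \<omega> t) -` A \<inter> space \<mu>" using \<open>g \<in> ?G\<close> by auto
      obtain k where k: "P k" "a \<le> t" "t < a + k" using hP[OF tA(1)] by auto
      show ?thesis unfolding apx_def
      proof (intro allI impI)
        fix e :: real assume e: "e > 0"
        obtain l S where lS: "2 * prob (g - {\<omega>\<in>space \<mu>. idx l (\<omega> t) \<in> S} \<union> ({\<omega>\<in>space \<mu>. idx l (\<omega> t) \<in> S} - g)) < e"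
          using coord_apx[OF tA(2) e, of t] tA(3) by auto
        have "{\<omega>\<in>space \<mu>. idx l (\<omega> t) \<in> S} = detset l a k {xs. xs ! (t - a) \<in> S}"
          unfolding detset_def cv_def using k by auto
        moreover have "detset l a k {xs. xs ! (t - a) \<in> S} \<in> detF a P" unfolding detF_def using k by blast
        ultimately show "\<exists>R\<in>detF a P. prob (g - R \<union> (R - g)) + prob (g - R \<union> (R - g)) < e"
          using lS by (intro bexI[of _ "detset l a k {xs. xs ! (t - a) \<in> S}"]) auto
      qed
    qed
  qed
qed

end


context stat begin

definition Rset :: "nat \<Rightarrow> nat \<Rightarrow> nat \<Rightarrow> nat \<Rightarrow> (nat list \<times> nat list) set \<Rightarrow> ((nat \<Rightarrow> real) \<times> (nat \<Rightarrow> real)) set" where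
  "Rset j a0 l b S = {p \<in> space \<mu> \<times> space \<mu>. (cv l 0 j (fst p), cv l a0 b (snd p)) \<in> S}"

definition cell :: "nat \<Rightarrow> nat \<Rightarrow> nat list \<times> nat list \<Rightarrow> ((nat \<Rightarrow> real) \<times> (nat \<Rightarrow> real)) set" where
  "cell l a0 p = cyl l 0 (fst p) \<times> cyl l a0 (snd p)"

lemma Rset_cells: "Rset j a0 l b S = (\<Union>p\<in>(Idx j l \<times> Idx b l) \<inter> S. cell l a0 p)"
proof
  show "Rset j a0 l b S \<subseteq> (\<Union>p\<in>(Idx j l \<times> Idx b l) \<inter> S. cell l a0 p)"
  proof
    fix x assume "x \<in> Rset j a0 l b S"
    then have x: "x \<in> space \<mu> \<times> space \<mu>" "(cv l 0 j (fst x), cv l a0 b (snd x)) \<in> S" unfolding Rset_def by auto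
    then have "x \<in> cell l a0 (cv l 0 j (fst x), cv l a0 b (snd x))"
      unfolding cell_def using cyl_cv[OF cv_Idx] by (auto simp: mem_Times_iff)
    then show "x \<in> (\<Union>p\<in>(Idx j l \<times> Idx b l) \<inter> S. cell l a0 p)" using x cv_Idx by blast
  qed
  show "(\<Union>p\<in>(Idx j l \<times> Idx b l) \<inter> S. cell l a0 p) \<subseteq> Rset j a0 l b S"
    unfolding Rset_def cell_def using cyl_cv by (auto simp: mem_Times_iff)
qed

lemma cell_sets:
  assumes "p \<in> Idx j l \<times> Idx b l" "a0 = j + m - 1"
  shows "cell l a0 p \<in> sets (RU {0..<j} \<Otimes>\<^sub>M RU {a0..})"
proof -
  have "cyl l 0 (fst p) \<in> gen_sa \<mu> {0..<j}" using cyl_gen[of "fst p" j l 0] assms by auto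
  moreover have "cyl l a0 (snd p) \<in> gen_sa \<mu> {a0..}"
  proof -
    have "snd p \<in> Idx b l" using assms by auto
    then have "cyl l a0 (snd p) \<in> gen_sa \<mu> {a0..<a0 + b}" by (rule cyl_gen)
    moreover have "gen_sa \<mu> {a0..<a0 + b} \<subseteq> gen_sa \<mu> {a0..}" by (rule gen_sa_mono) auto
    ultimately show ?thesis by blast
  qed
  ultimately show ?thesis unfolding cell_def by simp
qed

lemma Rset_sets: "a0 = j + m - 1 \<Longrightarrow> Rset j a0 l b S \<in> sets (RU {0..<j} \<Otimes>\<^sub>M RU {a0..})"
  unfolding Rset_cells using cell_sets finite_Idx
  by (intro sets.finite_UN) (auto simp: finite_cartesian_product)

lemma Rset_refine:
  assumes "l0 \<le> l" "b0 \<le> b"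
  shows "Rset j a0 l0 b0 S = Rset j a0 l b {p. (map (\<lambda>x. x div 2 ^ (l - l0)) (take j (fst p)), map (\<lambda>x. x div 2 ^ (l - l0)) (take b0 (snd p))) \<in> S}"
  unfolding Rset_def using cv_coarse[OF assms(1) order_refl, of 0 j] cv_coarse[OF assms] by auto

definition RF where "RF j a0 = {Rset j a0 l b S | l b S. True}"

lemma prob_diff_le:
  assumes "prob_space M" "A \<in> sets M" "B \<in> sets M"
  shows "\<bar>measure M A - measure M B\<bar> \<le> measure M (A - B \<union> (B - A))"
proof -
  interpret M: prob_space M by fact
  have "measure M A \<le> measure M (B \<union> (A - B))" using assms by (intro M.finite_measure_mono) auto
  also have "\<dots> \<le> measure M B + measure M (A - B)" using assms by (intro measure_Un_le) auto
  also have "measure M (A - B) \<le> measure M (A - B \<union> (B - A))" using assms by (intro M.finite_measure_mono) auto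
  finally have 1: "measure M A \<le> measure M B + measure M (A - B \<union> (B - A))" by simp
  have "measure M B \<le> measure M (A \<union> (B - A))" using assms by (intro M.finite_measure_mono) auto
  also have "\<dots> \<le> measure M A + measure M (B - A)" using assms by (intro measure_Un_le) auto
  also have "measure M (B - A) \<le> measure M (A - B \<union> (B - A))" using assms by (intro M.finite_measure_mono) auto
  finally have 2: "measure M B \<le> measure M A + measure M (A - B \<union> (B - A))" by simp
  show ?thesis using 1 2 by (auto simp: abs_le_iff)
qed

lemma apx2:
  assumes j: "j \<ge> 1" and a0: "a0 = j + m - 1"
    and W: "W \<in> sets (RU {0..<j} \<Otimes>\<^sub>M RU {a0..})"
  shows "apx (RU {0..<j} \<Otimes>\<^sub>M RU {a0..}) (DD {0..<j} {a0..}) (RF j a0) W"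
proof -
  let ?Q = "RU {0..<j} \<Otimes>\<^sub>M RU {a0..}" and ?P = "DD {0..<j} {a0..}"
  interpret Q: prob_space ?Q by (rule prob_PQ)
  interpret P: prob_space ?P by (rule prob_DD)
  have spQ: "space ?Q = space \<mu> \<times> space \<mu>" by (simp add: space_pair_measure)
  let ?G = "{a \<times> b | a b. a \<in> gen_sa \<mu> {0..<j} \<and> b \<in> gen_sa \<mu> {a0..}}"
  have sW: "W \<in> sigma_sets (space ?Q) ?G" using W unfolding sets_pair_measure spQ by simp
  show ?thesis
  proof (rule approx_sigma_sets[OF _ _ _ _ _ _ _ _ _ sW])
    show "finite_measure ?Q" by (rule Q.finite_measure_axioms)
    show "finite_measure ?P" by (rule P.finite_measure_axioms)
    show "sets ?P = sets ?Q" by simp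
    show "RF j a0 \<subseteq> sets ?Q" unfolding RF_def using Rset_sets[OF a0] by auto
    show "{} \<in> RF j a0" unfolding RF_def Rset_def by (auto intro!: exI[of _ "{}"])
    show "space ?Q - R \<in> RF j a0" if "R \<in> RF j a0" for R
    proof -
      obtain l b S where "R = Rset j a0 l b S" using \<open>R \<in> RF j a0\<close> unfolding RF_def by auto
      moreover have "space ?Q - Rset j a0 l b S = Rset j a0 l b (- S)" unfolding spQ Rset_def by auto
      ultimately show ?thesis unfolding RF_def by blast
    qed
    show "R1 \<union> R2 \<in> RF j a0" if "R1 \<in> RF j a0" "R2 \<in> RF j a0" for R1 R2
    proof -
      obtain l1 b1 S1 where 1: "R1 = Rset j a0 l1 b1 S1" using \<open>R1 \<in> RF j a0\<close> unfolding RF_def by auto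
      obtain l2 b2 S2 where 2: "R2 = Rset j a0 l2 b2 S2" using \<open>R2 \<in> RF j a0\<close> unfolding RF_def by auto
      let ?l = "max l1 l2" and ?b = "max b1 b2"
      define T1 where "T1 = {p. (map (\<lambda>x. x div 2 ^ (?l - l1)) (take j (fst p)), map (\<lambda>x. x div 2 ^ (?l - l1)) (take b1 (snd p))) \<in> S1}"
      define T2 where "T2 = {p. (map (\<lambda>x. x div 2 ^ (?l - l2)) (take j (fst p)), map (\<lambda>x. x div 2 ^ (?l - l2)) (take b2 (snd p))) \<in> S2}"
      have e1: "R1 = Rset j a0 ?l ?b T1" unfolding 1 T1_def by (rule Rset_refine) auto
      have e2: "R2 = Rset j a0 ?l ?b T2" unfolding 2 T2_def by (rule Rset_refine) auto
      have "R1 \<union> R2 = Rset j a0 ?l ?b (T1 \<union> T2)" unfolding e1 e2 Rset_def by auto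
      then show ?thesis unfolding RF_def by blast
    qed
    show "?G \<subseteq> sets ?Q" by (auto simp: sets_pair_measure intro: sigma_sets.Basic)
    show "apx ?Q ?P (RF j a0) g" if "g \<in> ?G" for g
    proof -
      obtain a b where ab: "g = a \<times> b" "a \<in> gen_sa \<mu> {0..<j}" "b \<in> gen_sa \<mu> {a0..}" using \<open>g \<in> ?G\<close> by auto
      have as: "a \<in> sets \<mu>" "b \<in> sets \<mu>" using ab gen_sa_sub by auto
      have apa: "apx \<mu> \<mu> (detF 0 (\<lambda>k. k = j)) a"
        by (rule apx1[OF ab(2), of "\<lambda>k. k = j" 0 j]) auto
      have apb: "apx \<mu> \<mu> (detF a0 (\<lambda>k. True)) b"
      proof (rule apx1[OF ab(3), of "\<lambda>k. True" a0 0])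
        show "\<exists>k. True \<and> a0 \<le> t \<and> t < a0 + k" if "t \<in> {a0..}" for t
          using that by (intro exI[of _ "t - a0 + 1"]) auto
      qed auto
      show ?thesis unfolding apx_def
      proof (intro allI impI)
        fix e :: real assume e: "e > 0"
        obtain R1 where R1: "R1 \<in> detF 0 (\<lambda>k. k = j)" "prob (a - R1 \<union> (R1 - a)) + prob (a - R1 \<union> (R1 - a)) < e / 2"
          using apa e unfolding apx_def by (meson half_gt_zero)
        obtain R2 where R2: "R2 \<in> detF a0 (\<lambda>k. True)" "prob (b - R2 \<union> (R2 - b)) + prob (b - R2 \<union> (R2 - b)) < e / 2"
          using apb e unfolding apx_def by (meson half_gt_zero)
        obtain l1 S1 where R1e: "R1 = detset l1 0 j S1" using R1(1) unfolding detF_def by auto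
        obtain l2 k2 S2 where R2e: "R2 = detset l2 a0 k2 S2" using R2(1) unfolding detF_def by auto
        let ?l = "max l1 l2"
        define S1' where "S1' = {xs. map (\<lambda>x. x div 2 ^ (?l - l1)) (take j xs) \<in> S1}"
        define S2' where "S2' = {xs. map (\<lambda>x. x div 2 ^ (?l - l2)) (take k2 xs) \<in> S2}"
        have R1': "R1 = detset ?l 0 j S1'" unfolding R1e S1'_def by (rule detset_refine) auto
        have R2': "R2 = detset ?l a0 k2 S2'" unfolding R2e S2'_def by (rule detset_refine) auto
        have RR: "R1 \<times> R2 = Rset j a0 ?l k2 (S1' \<times> S2')"
          unfolding R1' R2' Rset_def detset_def by auto
        have RRF: "R1 \<times> R2 \<in> RF j a0" unfolding RR RF_def by blast
        have R1g: "R1 \<in> gen_sa \<mu> {0..<j}" using detset_gen[of ?l 0 j S1'] R1' by simp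
        have "gen_sa \<mu> {a0..<a0 + k2} \<subseteq> gen_sa \<mu> {a0..}" by (rule gen_sa_mono) auto
        then have R2g: "R2 \<in> gen_sa \<mu> {a0..}" using detset_gen[of ?l a0 k2 S2'] R2' by auto
        interpret GI: sigma_algebra "space \<mu>" "gen_sa \<mu> {0..<j}" by (rule gen_sa_sigma)
        interpret GJ: sigma_algebra "space \<mu>" "gen_sa \<mu> {a0..}" by (rule gen_sa_sigma)
        define Da where "Da = a - R1 \<union> (R1 - a)"
        define Db where "Db = b - R2 \<union> (R2 - b)"
        have Dag: "Da \<in> gen_sa \<mu> {0..<j}" unfolding Da_def using ab(2) R1g by auto
        have Dbg: "Db \<in> gen_sa \<mu> {a0..}" unfolding Db_def using ab(3) R2g by auto
        have aS: "a \<subseteq> space \<mu>" "b \<subseteq> space \<mu>" "R1 \<subseteq> space \<mu>" "R2 \<subseteq> space \<mu>"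
          using as R1g R2g gen_sa_sub sets.sets_into_space by blast+
        have sub: "g - R1 \<times> R2 \<union> (R1 \<times> R2 - g) \<subseteq> Da \<times> space \<mu> \<union> space \<mu> \<times> Db"
          unfolding ab(1) Da_def Db_def using aS by auto
        have s1: "Da \<times> space \<mu> \<in> sets ?Q" using Dag gen_sa_space by simp
        have s2: "space \<mu> \<times> Db \<in> sets ?Q" using Dbg gen_sa_space by simp
        have abs: "a \<times> b \<in> sets ?Q" "R1 \<times> R2 \<in> sets ?Q" using ab R1g R2g by auto
        have gs: "g - R1 \<times> R2 \<union> (R1 \<times> R2 - g) \<in> sets ?Q"
          unfolding ab(1) using abs by auto
        have "measure ?Q (g - R1 \<times> R2 \<union> (R1 \<times> R2 - g)) \<le> measure ?Q (Da \<times> space \<mu> \<union> space \<mu> \<times> Db)"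
          using sub s1 s2 gs by (intro Q.finite_measure_mono) auto
        also have "\<dots> \<le> measure ?Q (Da \<times> space \<mu>) + measure ?Q (space \<mu> \<times> Db)" using s1 s2 by (rule measure_Un_le)
        also have "\<dots> = prob Da + prob Db" using PQ_rect[OF Dag gen_sa_space] PQ_rect[OF gen_sa_space Dbg] by (simp add: prob_space)
        finally have q: "measure ?Q (g - R1 \<times> R2 \<union> (R1 \<times> R2 - g)) \<le> prob Da + prob Db" .
        have "measure ?P (g - R1 \<times> R2 \<union> (R1 \<times> R2 - g)) \<le> measure ?P (Da \<times> space \<mu> \<union> space \<mu> \<times> Db)"
          using sub s1 s2 gs by (intro P.finite_measure_mono) auto
        also have "\<dots> \<le> measure ?P (Da \<times> space \<mu>) + measure ?P (space \<mu> \<times> Db)" using s1 s2 by (intro measure_Un_le) auto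
        also have "\<dots> = prob Da + prob Db" using DD_rect[OF Dag gen_sa_space] DD_rect[OF gen_sa_space Dbg] Dag Dbg gen_sa_sub
          by (simp add: Int_absorb2 Int_absorb1 sets.sets_into_space subset_iff)
        finally have p: "measure ?P (g - R1 \<times> R2 \<union> (R1 \<times> R2 - g)) \<le> prob Da + prob Db" .
        show "\<exists>R\<in>RF j a0. measure ?Q (g - R \<union> (R - g)) + measure ?P (g - R \<union> (R - g)) < e"
          using q p R1(2) R2(2) RRF unfolding Da_def Db_def by (intro bexI[of _ "R1 \<times> R2"]) auto
      qed
    qed
  qed
qed

end


context stat begin

lemma cyl_shift: "cyl l a is = sh a -` cyl l 0 is \<inter> space \<mu>"
  using sh_cyl[of _ a l 0 "is"] unfolding cyl_def by auto

lemma prob_cyl_shift: "is \<in> Idx k l \<Longrightarrow> prob (cyl l a is) = prob (cyl l 0 is)"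
  unfolding cyl_shift[of l a "is"] by (rule prob_sh) (rule cyl_sets)

lemma cells_two_prob:
  assumes a0: "a0 = j + m - 1"
  shows "two_prob (DD {0..<j} {a0..}) (RU {0..<j} \<Otimes>\<^sub>M RU {a0..}) (Idx j l \<times> Idx b l) (cell l a0)"
proof -
  have 1: "prob_space (DD {0..<j} {a0..})" by (rule prob_DD)
  have 2: "prob_space (RU {0..<j} \<Otimes>\<^sub>M RU {a0..})" by (rule prob_PQ)
  have 3: "sets (RU {0..<j} \<Otimes>\<^sub>M RU {a0..}) = sets (DD {0..<j} {a0..})" by simp
  have 4: "finite (Idx j l \<times> Idx b l)" using finite_Idx by simp
  have 5: "\<And>k. k \<in> Idx j l \<times> Idx b l \<Longrightarrow> cell l a0 k \<in> sets (DD {0..<j} {a0..})"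
    using cell_sets[OF _ a0] by simp
  have 6: "disjoint_family_on (cell l a0) (Idx j l \<times> Idx b l)"
    unfolding disjoint_family_on_def cell_def
  proof (intro ballI impI)
    fix p q assume p: "p \<in> Idx j l \<times> Idx b l" and q: "q \<in> Idx j l \<times> Idx b l" and pq: "p \<noteq> q"
    show "cyl l 0 (fst p) \<times> cyl l a0 (snd p) \<inter> cyl l 0 (fst q) \<times> cyl l a0 (snd q) = {}"
      using p q pq cyl_cv[of "fst p" j l 0] cyl_cv[of "fst q" j l 0] cyl_cv[of "snd p" b l a0] cyl_cv[of "snd q" b l a0]
      by (auto simp: prod_eq_iff)
  qed
  have 7: "(\<Union>k\<in>Idx j l \<times> Idx b l. cell l a0 k) = space (DD {0..<j} {a0..})"
    using Rset_cells[of j a0 l b UNIV] by (simp add: Rset_def space_pair_measure)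
  show ?thesis by (rule two_prob.intro[OF 1 2 3 4 5 6 7])
qed

lemma gen_mono_a0: "gen_sa \<mu> {a0..<a0 + b} \<subseteq> gen_sa \<mu> {a0..}"
  by (rule gen_sa_mono) auto

lemma P_cell: "a0 = j + m - 1 \<Longrightarrow> p \<in> Idx j l \<times> Idx b l \<Longrightarrow>
    measure (DD {0..<j} {a0..}) (cell l a0 p) = prob (cyl l 0 (fst p) \<inter> cyl l a0 (snd p))"
  unfolding cell_def using cyl_gen[of "fst p" j l 0] cyl_gen[of "snd p" b l a0] gen_mono_a0[of a0 b]
  by (intro DD_rect) auto

lemma Q_cell: "a0 = j + m - 1 \<Longrightarrow> p \<in> Idx j l \<times> Idx b l \<Longrightarrow>
    measure (RU {0..<j} \<Otimes>\<^sub>M RU {a0..}) (cell l a0 p) = prob (cyl l 0 (fst p)) * prob (cyl l 0 (snd p))"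
proof -
  assume a0: "a0 = j + m - 1" and p: "p \<in> Idx j l \<times> Idx b l"
  have "gen_sa \<mu> {a0..<a0 + b} \<subseteq> gen_sa \<mu> {a0..}" by (rule gen_sa_mono) auto
  then have "measure (RU {0..<j} \<Otimes>\<^sub>M RU {a0..}) (cell l a0 p) = prob (cyl l 0 (fst p)) * prob (cyl l a0 (snd p))"
    unfolding cell_def using cyl_gen[of "fst p" j l 0] cyl_gen[of "snd p" b l a0] p
    by (intro PQ_rect) auto
  then show ?thesis using prob_cyl_shift[of "snd p" b l a0] p by auto
qed

lemma Hd_cells:
  assumes "j \<in> {1..n - m}" "m \<ge> 1"
  defines "a0 \<equiv> j + m - 1" and "b \<equiv> n - m - j + 1"
  shows "Hd l n m j = (1 / 2) * (\<Sum>p\<in>Idx j l \<times> Idx b l.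
      \<bar>measure (DD {0..<j} {a0..}) (cell l a0 p) - measure (RU {0..<j} \<Otimes>\<^sub>M RU {a0..}) (cell l a0 p)\<bar>)"
proof -
  have "(\<Sum>p\<in>Idx j l \<times> Idx b l. \<bar>measure (DD {0..<j} {a0..}) (cell l a0 p) - measure (RU {0..<j} \<Otimes>\<^sub>M RU {a0..}) (cell l a0 p)\<bar>)
      = (\<Sum>p\<in>Idx j l \<times> Idx b l. \<bar>prob (cyl l 0 (fst p) \<inter> cyl l (j + m - 1) (snd p)) - prob (cyl l 0 (fst p)) * prob (cyl l 0 (snd p))\<bar>)"
    using P_cell Q_cell a0_def by (intro sum.cong) auto
  also have "\<dots> = (\<Sum>is1\<in>Idx j l. \<Sum>is2\<in>Idx b l. \<bar>prob (cyl l 0 is1 \<inter> cyl l (j + m - 1) is2) - prob (cyl l 0 is1) * prob (cyl l 0 is2)\<bar>)"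
    by (rule sum.cartesian_product[symmetric, unfolded split_def])
  finally show ?thesis unfolding Hd_def b_def by simp
qed

lemma Hd_le:
  assumes j: "j \<in> {1..n - m}" and m: "m \<ge> 1"
  shows "Hd l n m j \<le> beta_coef \<mu> m"
proof -
  define a0 where "a0 = j + m - 1"
  define b where "b = n - m - j + 1"
  interpret T: two_prob "DD {0..<j} {a0..}" "RU {0..<j} \<Otimes>\<^sub>M RU {a0..}" "Idx j l \<times> Idx b l" "cell l a0"
    by (rule cells_two_prob) (simp add: a0_def)
  let ?K = "{k\<in>Idx j l \<times> Idx b l. measure (DD {0..<j} {a0..}) (cell l a0 k) - measure (RU {0..<j} \<Otimes>\<^sub>M RU {a0..}) (cell l a0 k) > 0}"
  have Rs: "(\<Union>k\<in>?K. cell l a0 k) \<in> sets (RU {0..<j} \<Otimes>\<^sub>M RU {a0..})"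
    using cell_sets[of _ j l b a0 m] finite_Idx a0_def
    by (intro sets.finite_UN) (auto simp: finite_cartesian_product)
  have "Hd l n m j = (1 / 2) * (\<Sum>p\<in>Idx j l \<times> Idx b l.
      \<bar>measure (DD {0..<j} {a0..}) (cell l a0 p) - measure (RU {0..<j} \<Otimes>\<^sub>M RU {a0..}) (cell l a0 p)\<bar>)"
    using Hd_cells[OF j m] unfolding a0_def b_def by simp
  also have "\<dots> = measure (DD {0..<j} {a0..}) (\<Union>k\<in>?K. cell l a0 k) - measure (RU {0..<j} \<Otimes>\<^sub>M RU {a0..}) (\<Union>k\<in>?K. cell l a0 k)"
    using T.attained by simp
  also have "\<dots> \<le> beta_sa \<mu> (gen_sa \<mu> {0..<j}) (gen_sa \<mu> {a0..})"
    using beta_sa_ge[OF Rs] by simp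
  also have "\<dots> \<le> beta_coef \<mu> m" unfolding a0_def using j by (intro beta_coef_ge) auto
  finally show ?thesis .
qed

lemma disc_le: "m \<ge> 1 \<Longrightarrow> m < n \<Longrightarrow> disc l n m \<le> beta_coef \<mu> m"
  unfolding disc_def using Hd_le by (intro Max.boundedI) auto

lemma disc_ge_Hd: "j \<in> {1..n - m} \<Longrightarrow> Hd l n m j \<le> disc l n m"
  unfolding disc_def by (intro Max_ge) auto

lemma Rset_Hd:
  assumes j: "j \<in> {1..n - m}" and m: "m \<ge> 1" and l: "l0 \<le> l" and b: "b0 \<le> n - m - j + 1"
  shows "\<bar>measure (DD {0..<j} {j + m - 1..}) (Rset j (j + m - 1) l0 b0 S)
          - measure (RU {0..<j} \<Otimes>\<^sub>M RU {j + m - 1..}) (Rset j (j + m - 1) l0 b0 S)\<bar> \<le> Hd l n m j"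
proof -
  define a0 where "a0 = j + m - 1"
  define b where "b = n - m - j + 1"
  interpret T: two_prob "DD {0..<j} {a0..}" "RU {0..<j} \<Otimes>\<^sub>M RU {a0..}" "Idx j l \<times> Idx b l" "cell l a0"
    by (rule cells_two_prob) (simp add: a0_def)
  define S' where "S' = {p. (map (\<lambda>x. x div 2 ^ (l - l0)) (take j (fst p)), map (\<lambda>x. x div 2 ^ (l - l0)) (take b0 (snd p))) \<in> S}"
  have "Rset j a0 l0 b0 S = Rset j a0 l b S'" unfolding S'_def using l b unfolding b_def by (intro Rset_refine) auto
  also have "\<dots> = (\<Union>p\<in>(Idx j l \<times> Idx b l) \<inter> S'. cell l a0 p)" by (rule Rset_cells)
  finally have e: "Rset j a0 l0 b0 S = (\<Union>p\<in>(Idx j l \<times> Idx b l) \<inter> S'. cell l a0 p)" .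
  show ?thesis
    unfolding a0_def[symmetric] e Hd_cells[OF j m] b_def[symmetric] by (rule T.union_bound) auto
qed

lemma beta_coef_approx:
  assumes m: "m \<ge> 1" and e: "e > 0"
  shows "\<exists>j\<ge>1. beta_coef \<mu> m - e < beta_sa \<mu> (gen_sa \<mu> {0..<j}) (gen_sa \<mu> {j + m - 1..})"
proof -
  have "beta_coef \<mu> m - e < beta_coef \<mu> m" using e by simp
  moreover have ne: "{1..} \<noteq> ({} :: nat set)" by auto
  ultimately have "\<exists>x\<in>{1..}. beta_coef \<mu> m - e < beta_sa \<mu> (gen_sa \<mu> {0..<x}) (gen_sa \<mu> {x + m - 1..})"
    using less_cSUP_iff[OF ne beta_coef_bdd[of m], of "beta_coef \<mu> m - e"]
    by (simp only: beta_coef_def[symmetric])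
  then show ?thesis by auto
qed

lemma beta_sa_approx:
  assumes e: "e > 0"
  shows "\<exists>W\<in>sets (RU I \<Otimes>\<^sub>M RU J). beta_sa \<mu> (gen_sa \<mu> I) (gen_sa \<mu> J) - e
     < \<bar>measure (DD I J) W - measure (RU I \<Otimes>\<^sub>M RU J) W\<bar>"
proof -
  have bdd: "bdd_above ((\<lambda>W. \<bar>measure (DD I J) W - measure (RU I \<Otimes>\<^sub>M RU J) W\<bar>) ` sets (RU I \<Otimes>\<^sub>M RU J))"
    by (rule bdd_aboveI[of _ 1]) (auto intro: beta_sa_term_le1)
  have ne: "sets (RU I \<Otimes>\<^sub>M RU J) \<noteq> {}" using sets.empty_sets by blast
  have "beta_sa \<mu> (gen_sa \<mu> I) (gen_sa \<mu> J) - e < beta_sa \<mu> (gen_sa \<mu> I) (gen_sa \<mu> J)" using e by simp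
  then show ?thesis unfolding beta_sa_def using less_cSUP_iff[OF ne bdd] by auto
qed

lemma disc_lower:
  assumes m: "m \<ge> 1" and e: "e > 0"
  shows "\<exists>L N. \<forall>l\<ge>L. \<forall>n\<ge>N. beta_coef \<mu> m - e \<le> disc l n m"
proof -
  obtain j where j: "j \<ge> 1" "beta_coef \<mu> m - e / 3 < beta_sa \<mu> (gen_sa \<mu> {0..<j}) (gen_sa \<mu> {j + m - 1..})"
    using beta_coef_approx[OF m, of "e / 3"] e by auto
  define a0 where "a0 = j + m - 1"
  let ?P = "DD {0..<j} {a0..}" and ?Q = "RU {0..<j} \<Otimes>\<^sub>M RU {a0..}"
  obtain W where W: "W \<in> sets ?Q" "beta_sa \<mu> (gen_sa \<mu> {0..<j}) (gen_sa \<mu> {a0..}) - e / 3 < \<bar>measure ?P W - measure ?Q W\<bar>"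
    using beta_sa_approx[of "e / 3" "{0..<j}" "{a0..}"] e by auto
  obtain R where R: "R \<in> RF j a0" "measure ?Q (W - R \<union> (R - W)) + measure ?P (W - R \<union> (R - W)) < e / 3"
    using apx2[OF j(1) a0_def W(1)] e unfolding apx_def by (meson divide_pos_pos zero_less_numeral)
  obtain l0 b0 S where RS: "R = Rset j a0 l0 b0 S" using R(1) unfolding RF_def by auto
  have Rs: "R \<in> sets ?Q" unfolding RS using Rset_sets a0_def by auto
  have dP: "\<bar>measure ?P W - measure ?P R\<bar> \<le> measure ?P (W - R \<union> (R - W))"
    using W(1) Rs by (intro prob_diff_le prob_DD) auto
  have dQ: "\<bar>measure ?Q W - measure ?Q R\<bar> \<le> measure ?Q (W - R \<union> (R - W))"
    using W(1) Rs by (intro prob_diff_le prob_PQ) auto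
  have key: "beta_coef \<mu> m - e < \<bar>measure ?P R - measure ?Q R\<bar>"
  proof -
    have gen: "B - E / 3 < s \<Longrightarrow> s - E / 3 < \<bar>a - q\<bar> \<Longrightarrow> \<bar>a - c\<bar> \<le> x \<Longrightarrow> \<bar>q - d\<bar> \<le> y
       \<Longrightarrow> y + x < E / 3 \<Longrightarrow> B - E < \<bar>c - d\<bar>" for B s a q c d x y E :: real
      by (auto simp: abs_if split: if_splits)
    show ?thesis using gen[OF j(2) W(2)[unfolded a0_def] dP[unfolded a0_def] dQ[unfolded a0_def] R(2)[unfolded a0_def]] unfolding a0_def .
  qed
  show ?thesis
  proof (intro exI allI impI)
    fix l n assume l: "l0 \<le> l" and n: "j + m + b0 \<le> n"
    have jn: "j \<in> {1..n - m}" using j(1) n by auto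
    have "beta_coef \<mu> m - e \<le> \<bar>measure ?P R - measure ?Q R\<bar>" using key by simp
    also have "\<dots> \<le> Hd l n m j" unfolding RS a0_def using Rset_Hd[OF jn m l] n by auto
    also have "\<dots> \<le> disc l n m" by (rule disc_ge_Hd[OF jn])
    finally show "beta_coef \<mu> m - e \<le> disc l n m" .
  qed
qed

end


lemma pow7: "1 \<le> x \<Longrightarrow> 7 * x \<le> (2::nat) ^ (2 * x + 1)"
proof (induction x rule: nat_induct_at_least)
  case base then show ?case by simp
next
  case (Suc x)
  have "7 * Suc x = 7 * x + 7" by simp
  also have "\<dots> \<le> 2 ^ (2 * x + 1) + 7" using Suc by simp
  also have "(8::nat) \<le> 2 ^ (2 * x + 1)"
  proof -
    have "(2::nat) ^ 3 \<le> 2 ^ (2 * x + 1)" using Suc by (intro power_increasing) auto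
    then show ?thesis by simp
  qed
  then have "2 ^ (2 * x + 1) + 7 \<le> (2::nat) ^ (2 * Suc x + 1)" by (simp add: power_add)
  finally show ?case .
qed

lemma nat_bound:
  assumes x: "1 \<le> x" and n: "n \<le> 2 ^ x" and M: "M \<le> 2 ^ x" and y: "1 \<le> y"
  shows "27 * n * M ^ 2 * 2 ^ (3 * x) \<le> (2::nat) ^ (2 ^ (2 * x + 1) + 2 ^ (y + 1) + 2)"
proof -
  have "27 * n * M ^ 2 * 2 ^ (3 * x) \<le> 32 * 2 ^ x * (2 ^ x) ^ 2 * 2 ^ (3 * x)"
    using n M by (intro mult_mono power_mono) auto
  also have "\<dots> = (2::nat) ^ (6 * x + 5)"
  proof -
    have "(32::nat) * 2 ^ x * (2 ^ x) ^ 2 * 2 ^ (3 * x) = 2 ^ 5 * 2 ^ x * 2 ^ (2 * x) * 2 ^ (3 * x)"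
      by (simp add: power_mult[symmetric] mult.commute)
    also have "\<dots> = 2 ^ (5 + x + 2 * x + 3 * x)" by (simp only: power_add mult.assoc)
    also have "5 + x + 2 * x + 3 * x = 6 * x + 5" by simp
    finally show ?thesis .
  qed
  also have "\<dots> \<le> 2 ^ (2 ^ (2 * x + 1) + 2 ^ (y + 1) + 2)"
  proof (rule power_increasing)
    have "(4::nat) \<le> 2 ^ (y + 1)"
    proof -
      have "(2::nat) ^ 2 \<le> 2 ^ (y + 1)" using y by (intro power_increasing) auto
      then show ?thesis by simp
    qed
    then show "6 * x + 5 \<le> 2 ^ (2 * x + 1) + 2 ^ (y + 1) + 2" using pow7[OF x] by linarith
  qed simp
  finally show ?thesis .
qed

lemma gen_bound:
  fixes \<tau> \<epsilon> \<delta> K X N M P :: real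
  assumes tau: "\<tau> \<ge> M * P / (\<epsilon>\<^sup>2 * \<delta>)" and e: "\<epsilon> > 0" and d: "\<delta> > 0" and K: "K \<ge> 0" and M: "M \<ge> 1"
    and X: "X > 0" and P: "P > 0" and bnd: "27 * N * M\<^sup>2 * X ^ 3 \<le> P" and N: "N \<ge> 0"
  shows "M * (3 * N * X * (K / (\<tau> * (\<epsilon> / (3 * M * X))\<^sup>2))) \<le> K * \<delta>"
proof -
  have tpos: "\<tau> > 0" using tau e d M P by (smt (verit) divide_pos_pos mult_pos_pos zero_less_power)
  have "\<tau> * \<epsilon>\<^sup>2 \<ge> M * P / \<delta>" using tau e d by (simp add: field_simps)
  have eq: "M * (3 * N * X * (K / (\<tau> * (\<epsilon> / (3 * M * X))\<^sup>2))) = 27 * N * M ^ 3 * X ^ 3 * K / (\<tau> * \<epsilon>\<^sup>2)"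
    using M X e tpos by (simp add: field_simps power2_eq_square power3_eq_cube)
  have "27 * N * M ^ 3 * X ^ 3 * K / (\<tau> * \<epsilon>\<^sup>2) \<le> 27 * N * M ^ 3 * X ^ 3 * K / (M * P / \<delta>)"
    using \<open>\<tau> * \<epsilon>\<^sup>2 \<ge> M * P / \<delta>\<close> M P d K N X tpos e by (intro divide_left_mono mult_nonneg_nonneg) auto
  also have "\<dots> = (27 * N * M\<^sup>2 * X ^ 3) * (K * \<delta>) / P"
    using M P d by (simp add: field_simps power2_eq_square power3_eq_cube)
  also have "\<dots> \<le> P * (K * \<delta>) / P" using bnd K d P by (intro divide_right_mono mult_right_mono) auto
  also have "\<dots> = K * \<delta>" using P by simp
  finally show ?thesis using eq by simp
qed


lemma ev_ge:
  fixes f :: "nat \<Rightarrow> nat"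
  assumes "mono f" "\<not> bdd_above (range f)"
  shows "eventually (\<lambda>t. L \<le> f t) sequentially"
proof -
  have "\<exists>t0. L < f t0"
  proof (rule ccontr)
    assume "\<not> (\<exists>t0. L < f t0)"
    then have "bdd_above (range f)" by (intro bdd_aboveI[of _ L]) (auto simp: not_less)
    then show False using assms(2) by simp
  qed
  then obtain t0 where "L < f t0" by blast
  then have "\<forall>t\<ge>t0. L \<le> f t" using assms(1) unfolding mono_def by (meson le_trans less_imp_le)
  then show ?thesis unfolding eventually_sequentially by blast
qed

context stat begin

lemma disc_nonneg: "m < n \<Longrightarrow> 0 \<le> disc l n m"
proof -
  assume "m < n"
  then have "1 \<in> {1..n - m}" by auto
  then have "Hd l n m 1 \<le> disc l n m" by (rule disc_ge_Hd)
  moreover have "0 \<le> Hd l n m 1" unfolding Hd_def by (auto intro!: sum_nonneg)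
  ultimately show ?thesis by linarith
qed

lemma disc_lim:
  fixes ell n :: "nat \<Rightarrow> nat"
  assumes "mono ell" "\<not> bdd_above (range ell)" "mono n" "\<not> bdd_above (range n)" and m: "m \<ge> 1"
  shows "(\<lambda>t. disc (ell t) (n t) m) \<longlonglongrightarrow> beta_coef \<mu> m"
proof (rule tendstoI)
  fix e :: real assume e: "e > 0"
  obtain L N where LN: "\<forall>l\<ge>L. \<forall>k\<ge>N. beta_coef \<mu> m - e / 2 \<le> disc l k m"
    using disc_lower[OF m, of "e / 2"] e by auto
  have "eventually (\<lambda>t. L \<le> ell t) sequentially" by (rule ev_ge[OF assms(1,2)])
  moreover have "eventually (\<lambda>t. max N (Suc m) \<le> n t) sequentially" by (rule ev_ge[OF assms(3,4)])
  ultimately show "eventually (\<lambda>t. dist (disc (ell t) (n t) m) (beta_coef \<mu> m) < e) sequentially"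
  proof eventually_elim
    case (elim t)
    then have "beta_coef \<mu> m - e / 2 \<le> disc (ell t) (n t) m" using LN by auto
    moreover have "disc (ell t) (n t) m \<le> beta_coef \<mu> m" using elim m by (intro disc_le) auto
    ultimately show ?case using e by (simp add: dist_real_def abs_if)
  qed
qed

lemma tau_ge:
  fixes C x :: real
  assumes "C > 0" "x > 0"
  shows "real (nat \<lceil>C / x\<rceil>) \<ge> C / x" "nat \<lceil>C / x\<rceil> \<ge> 1"
proof -
  have p: "C / x > 0" using assms by simp
  show "real (nat \<lceil>C / x\<rceil>) \<ge> C / x" using p by linarith
  have "\<lceil>C / x\<rceil> \<ge> 1" using p by (simp add: one_le_ceiling) 
  then show "nat \<lceil>C / x\<rceil> \<ge> 1" by linarith
qed

lemma part1:
  fixes ell n :: "nat \<Rightarrow> nat" and dlt eps :: "nat \<Rightarrow> real"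
  assumes summ: "summable (\<lambda>m. beta_coef \<mu> (Suc m))"
    and l_pos: "\<forall>t. ell t > 0" and l_mono: "mono ell" and l_unb: "\<not> bdd_above (range ell)"
    and n_pos: "\<forall>t. n t > 0" and n_mono: "mono n" and n_unb: "\<not> bdd_above (range n)"
    and dlt_pos: "\<forall>t. dlt t > 0" and dlt_sum: "summable dlt"
    and eps_pos: "\<forall>t. eps t > 0" and eps_lim: "eps \<longlonglongrightarrow> 0"
    and m: "m \<ge> 1"
  shows "AE \<omega> in \<mu>. (\<lambda>t. beta_hat (ell t) (nat \<lceil>Ctil m (ell t) (n t) / (real m * (eps t)\<^sup>2 * dlt t)\<rceil>) (n t) \<omega> m)
              \<longlonglongrightarrow> beta_coef \<mu> m"
proof -
  have dltp: "\<And>t. dlt t > 0" and epsp: "\<And>t. eps t > 0" using dlt_pos eps_pos by auto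
  have lp: "\<And>t. ell t > 0" and np: "\<And>t. n t > 0" using l_pos n_pos by auto
  define K where "K = 1 + 2 * (\<Sum>m. beta_coef \<mu> (Suc m))"
  have K0: "K \<ge> 0"
  proof -
    have "0 \<le> (\<Sum>m. beta_coef \<mu> (Suc m))" using summ beta_coef_nonneg by (intro suminf_nonneg) auto
    then show ?thesis unfolding K_def by simp
  qed
  define \<tau> where "\<tau> t = nat \<lceil>Ctil m (ell t) (n t) / (real m * (eps t)\<^sup>2 * dlt t)\<rceil>" for t
  define X where "X t = (2::real) ^ (ell t * n t)" for t
  define \<eta> where "\<eta> t = eps t / (3 * 1 * X t)" for t
  define E where "E t = 2 ^ (2 * n t * ell t + 1) + 2 ^ (m * ell t + 1) + (2::nat)" for t
  have Ct: "Ctil m (ell t) (n t) = real m * 2 ^ E t" for t unfolding Ctil_def E_def by simp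
  have Xpos: "X t > 0" for t unfolding X_def by simp
  have etapos: "\<eta> t > 0" for t unfolding \<eta>_def using eps_pos Xpos by auto
  have Cpos: "Ctil m (ell t) (n t) > 0" for t using m unfolding Ct by simp
  have dpos: "real m * (eps t)\<^sup>2 * dlt t > 0" for t
  proof -
    have "eps t > 0" "dlt t > 0" "real m > 0" using m eps_pos dlt_pos by auto
    then show ?thesis by simp
  qed
  have tau1: "\<tau> t \<ge> 1" for t unfolding \<tau>_def using tau_ge(2)[OF Cpos dpos] .
  define Good where "Good t B \<longleftrightarrow> B \<in> sets \<mu> \<and> prob B \<le> 3 * real (n t) * 2 ^ (ell t * n t) * (K / (real (\<tau> t) * (\<eta> t)\<^sup>2))
      \<and> (\<forall>\<omega>\<in>space \<mu> - B. \<bar>beta_hat (ell t) (\<tau> t) (n t) \<omega> m - disc (ell t) (n t) m\<bar> \<le> 3 / 2 * \<eta> t * 2 ^ (ell t * n t))" for t B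
  have ex: "\<exists>B. Good t B" if "m < n t" for t
    using stoch[OF summ m that tau1 etapos, of "ell t"] unfolding Good_def K_def by blast
  define A where "A t = (if m < n t then (SOME B. Good t B) else {})" for t
  have AG: "Good t (A t)" if "m < n t" for t using someI_ex[OF ex[OF that]] that unfolding A_def by simp
  have As: "A t \<in> sets \<mu>" for t using AG unfolding A_def Good_def by (cases "m < n t") auto
  have Ap: "prob (A t) \<le> K * dlt t" for t
  proof (cases "m < n t")
    case False then show ?thesis unfolding A_def using K0 dltp[of t] by simp
  next
    case True
    have "prob (A t) \<le> 3 * real (n t) * 2 ^ (ell t * n t) * (K / (real (\<tau> t) * (\<eta> t)\<^sup>2))"
      using AG[OF True] unfolding Good_def by simp
    also have "\<dots> = 1 * (3 * real (n t) * X t * (K / (real (\<tau> t) * (eps t / (3 * 1 * X t))\<^sup>2)))"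
      unfolding X_def \<eta>_def by simp
    also have "\<dots> \<le> K * dlt t"
    proof (rule gen_bound)
      have "real (\<tau> t) \<ge> Ctil m (ell t) (n t) / (real m * (eps t)\<^sup>2 * dlt t)"
        unfolding \<tau>_def by (rule tau_ge(1)[OF Cpos dpos])
      also have "Ctil m (ell t) (n t) / (real m * (eps t)\<^sup>2 * dlt t) = 1 * 2 ^ E t / ((eps t)\<^sup>2 * dlt t)"
        unfolding Ct using m by simp
      finally show "1 * 2 ^ E t / ((eps t)\<^sup>2 * dlt t) \<le> real (\<tau> t)" .
      have x1: "1 \<le> n t * ell t" using lp[of t] np[of t] by (simp add: Suc_le_eq)
      have nx: "n t \<le> 2 ^ (n t * ell t)"
      proof -
        have "n t < 2 ^ n t" by (rule less_exp)
        also have "(2::nat) ^ n t \<le> 2 ^ (n t * ell t)" using lp[of t] by (intro power_increasing) auto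
        finally show ?thesis by simp
      qed
      have y1: "1 \<le> m * ell t" using m lp[of t] by (simp add: Suc_le_eq)
      have "27 * n t * 1 ^ 2 * 2 ^ (3 * (n t * ell t)) \<le> (2::nat) ^ (2 ^ (2 * (n t * ell t) + 1) + 2 ^ (m * ell t + 1) + 2)"
        by (rule nat_bound[OF x1 nx _ y1]) simp
      then have "real (27 * n t * 1 ^ 2 * 2 ^ (3 * (n t * ell t))) \<le> real ((2::nat) ^ E t)"
        unfolding E_def by (simp only: of_nat_le_iff mult.assoc)
      moreover have "X t ^ 3 = 2 ^ (3 * (n t * ell t))" unfolding X_def by (simp add: power_mult[symmetric] mult.commute)
      ultimately show "27 * real (n t) * 1\<^sup>2 * X t ^ 3 \<le> 2 ^ E t" by simp
    qed (use epsp dltp K0 Xpos in auto)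
    finally show ?thesis .
  qed
  have summA: "summable (\<lambda>t. prob (A t))"
    by (rule summable_comparison_test[of _ "\<lambda>t. K * dlt t"]) (use Ap in \<open>auto intro: summable_mult dlt_sum\<close>)
  have AE1: "AE \<omega> in \<mu>. eventually (\<lambda>t. \<omega> \<in> space \<mu> - A t) sequentially"
    by (rule borel_cantelli_AE1[OF As _ summA]) (simp add: emeasure_eq_measure)
  have dl: "(\<lambda>t. disc (ell t) (n t) m) \<longlonglongrightarrow> beta_coef \<mu> m" by (rule disc_lim[OF l_mono l_unb n_mono n_unb m])
  have evn: "eventually (\<lambda>t. Suc m \<le> n t) sequentially" by (rule ev_ge[OF n_mono n_unb])
  show ?thesis
  proof (rule AE_mp[OF AE1], intro AE_I2 impI)
    fix \<omega> assume w: "\<omega> \<in> space \<mu>" and ev: "eventually (\<lambda>t. \<omega> \<in> space \<mu> - A t) sequentially"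
    have ev2: "eventually (\<lambda>t. norm (beta_hat (ell t) (\<tau> t) (n t) \<omega> m - disc (ell t) (n t) m) \<le> eps t / 2) sequentially"
      using ev evn
    proof eventually_elim
      case (elim t)
      then have mt: "m < n t" by simp
      have "\<bar>beta_hat (ell t) (\<tau> t) (n t) \<omega> m - disc (ell t) (n t) m\<bar> \<le> 3 / 2 * \<eta> t * 2 ^ (ell t * n t)"
        using AG[OF mt] elim(1) unfolding Good_def by blast
      also have "\<dots> = eps t / 2" unfolding \<eta>_def X_def by simp
      finally show ?case by simp
    qed
    have "(\<lambda>t. eps t / 2) \<longlonglongrightarrow> 0" using tendsto_divide[OF eps_lim tendsto_const, of 2] by simp
    then have z: "(\<lambda>t. beta_hat (ell t) (\<tau> t) (n t) \<omega> m - disc (ell t) (n t) m) \<longlonglongrightarrow> 0"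
      by (rule Lim_null_comparison[OF ev2])
    have "(\<lambda>t. (beta_hat (ell t) (\<tau> t) (n t) \<omega> m - disc (ell t) (n t) m) + disc (ell t) (n t) m) \<longlonglongrightarrow> 0 + beta_coef \<mu> m"
      by (rule tendsto_add[OF z dl])
    then show "(\<lambda>t. beta_hat (ell t) (nat \<lceil>Ctil m (ell t) (n t) / (real m * (eps t)\<^sup>2 * dlt t)\<rceil>) (n t) \<omega> m) \<longlonglongrightarrow> beta_coef \<mu> m"
      unfolding \<tau>_def by simp
  qed
qed

lemma sum_disc_lim:
  fixes ell n M :: "nat \<Rightarrow> nat"
  assumes summ: "summable (\<lambda>m. beta_coef \<mu> (Suc m))"
    and l_mono: "mono ell" and l_unb: "\<not> bdd_above (range ell)"
    and n_mono: "mono n" and n_unb: "\<not> bdd_above (range n)"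
    and M_inc: "strict_mono M" and nM: "\<And>t. n t > M t"
  shows "(\<lambda>t. \<Sum>m=1..M t. disc (ell t) (n t) m) \<longlonglongrightarrow> (\<Sum>m. beta_coef \<mu> (Suc m))"
proof -
  define a where "a k t = (if Suc k \<le> M t then disc (ell t) (n t) (Suc k) else 0)" for k t
  have eq: "(\<Sum>m=1..M t. disc (ell t) (n t) m) = (\<Sum>k. a k t)" for t
  proof -
    have "(\<Sum>k. a k t) = (\<Sum>k\<in>{..<M t}. a k t)" by (rule suminf_finite) (auto simp: a_def)
    also have "\<dots> = (\<Sum>k<M t. disc (ell t) (n t) (Suc k))" by (rule sum.cong) (auto simp: a_def)
    also have "\<dots> = (\<Sum>m=Suc 0..M t. disc (ell t) (n t) m)" by (rule sum.atLeast1_atMost_eq[symmetric])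
    finally show ?thesis by simp
  qed
  have T: "eventually (\<lambda>t. summable (\<lambda>k. norm (a k t))) sequentially \<and> summable (\<lambda>k. norm (beta_coef \<mu> (Suc k))) \<and>
      ((\<lambda>t. suminf (\<lambda>k. a k t)) \<longlonglongrightarrow> suminf (\<lambda>k. beta_coef \<mu> (Suc k)))"
  proof (rule tannerys_theorem[where M = "\<lambda>k. beta_coef \<mu> (Suc k)"])
    fix k
    have ev: "eventually (\<lambda>t. disc (ell t) (n t) (Suc k) = a k t) sequentially"
    proof -
      have "eventually (\<lambda>t. Suc k \<le> t) sequentially" by (rule eventually_ge_at_top)
      then show ?thesis
      proof eventually_elim
        case (elim t)
        then have "Suc k \<le> M t" using seq_suble[OF M_inc, of t] by linarith
        then show ?case unfolding a_def by simp
      qed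
    qed
    have "(\<lambda>t. disc (ell t) (n t) (Suc k)) \<longlonglongrightarrow> beta_coef \<mu> (Suc k)"
      by (rule disc_lim[OF l_mono l_unb n_mono n_unb]) simp
    then show "(\<lambda>t. a k t) \<longlonglongrightarrow> beta_coef \<mu> (Suc k)" using tendsto_cong[OF ev] by simp
  next
    show "eventually (\<lambda>(k, t). norm (a k t) \<le> beta_coef \<mu> (Suc k)) (at_top \<times>\<^sub>F sequentially)"
    proof (rule always_eventually, clarify)
      fix k t
      show "norm (a k t) \<le> beta_coef \<mu> (Suc k)"
      proof (cases "Suc k \<le> M t")
        case True
        then have "Suc k < n t" using nM[of t] by linarith
        then show ?thesis unfolding a_def using True disc_nonneg disc_le[of "Suc k" "n t" "ell t"] by auto
      next
        case False then show ?thesis unfolding a_def using beta_coef_nonneg by simp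
      qed
    qed
  qed (use summ in auto)
  then show ?thesis unfolding eq by simp
qed

lemma part2:
  fixes ell n M :: "nat \<Rightarrow> nat" and dlt eps :: "nat \<Rightarrow> real"
  assumes summ: "summable (\<lambda>m. beta_coef \<mu> (Suc m))"
    and l_pos: "\<forall>t. ell t > 0" and l_mono: "mono ell" and l_unb: "\<not> bdd_above (range ell)"
    and n_pos: "\<forall>t. n t > 0" and n_mono: "mono n" and n_unb: "\<not> bdd_above (range n)"
    and M_pos: "\<forall>t. M t > 0" and M_inc: "strict_mono M" and nM: "\<forall>t. n t > M t"
    and dlt_pos: "\<forall>t. dlt t > 0" and dlt_sum: "summable dlt"
    and eps_pos: "\<forall>t. eps t > 0" and eps_lim: "eps \<longlonglongrightarrow> 0"
  shows "AE \<omega> in \<mu>. (\<lambda>t. \<Sum>m=1..M t. beta_hat (ell t) (nat \<lceil>Ctil (M t) (ell t) (n t) / ((eps t)\<^sup>2 * dlt t)\<rceil>) (n t) \<omega> m)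
              \<longlonglongrightarrow> (\<Sum>m. beta_coef \<mu> (Suc m))"
proof -
  have dltp: "\<And>t. dlt t > 0" and epsp: "\<And>t. eps t > 0" using dlt_pos eps_pos by auto
  have lp: "\<And>t. ell t > 0" and np: "\<And>t. n t > 0" using l_pos n_pos by auto
  have Mp: "\<And>t. M t > 0" and nMp: "\<And>t. n t > M t" using M_pos nM by auto
  define K where "K = 1 + 2 * (\<Sum>m. beta_coef \<mu> (Suc m))"
  have K0: "K \<ge> 0"
  proof -
    have "0 \<le> (\<Sum>m. beta_coef \<mu> (Suc m))" using summ beta_coef_nonneg by (intro suminf_nonneg) auto
    then show ?thesis unfolding K_def by simp
  qed
  define \<kappa> where "\<kappa> t = nat \<lceil>Ctil (M t) (ell t) (n t) / ((eps t)\<^sup>2 * dlt t)\<rceil>" for t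
  define X where "X t = (2::real) ^ (ell t * n t)" for t
  define \<eta> where "\<eta> t = eps t / (3 * real (M t) * X t)" for t
  define E where "E t = 2 ^ (2 * n t * ell t + 1) + 2 ^ (M t * ell t + 1) + (2::nat)" for t
  have Ct: "Ctil (M t) (ell t) (n t) = real (M t) * 2 ^ E t" for t unfolding Ctil_def E_def by simp
  have Xpos: "X t > 0" for t unfolding X_def by simp
  have etapos: "\<eta> t > 0" for t unfolding \<eta>_def using epsp[of t] Xpos[of t] Mp[of t] by auto
  have Cpos: "Ctil (M t) (ell t) (n t) > 0" for t using Mp[of t] unfolding Ct by simp
  have dpos: "(eps t)\<^sup>2 * dlt t > 0" for t using epsp[of t] dltp[of t] by simp
  have k1: "\<kappa> t \<ge> 1" for t unfolding \<kappa>_def using tau_ge(2)[OF Cpos dpos] .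
  define Good where "Good t m B \<longleftrightarrow> B \<in> sets \<mu> \<and> prob B \<le> 3 * real (n t) * 2 ^ (ell t * n t) * (K / (real (\<kappa> t) * (\<eta> t)\<^sup>2))
      \<and> (\<forall>\<omega>\<in>space \<mu> - B. \<bar>beta_hat (ell t) (\<kappa> t) (n t) \<omega> m - disc (ell t) (n t) m\<bar> \<le> 3 / 2 * \<eta> t * 2 ^ (ell t * n t))" for t m B
  have ex: "\<exists>B. Good t m B" if "m \<in> {1..M t}" for t m
  proof -
    have m1: "1 \<le> m" and mn: "m < n t" using that nMp[of t] by auto
    show ?thesis using stoch[OF summ m1 mn k1 etapos, of "ell t"] unfolding Good_def K_def by blast
  qed
  define B where "B t m = (SOME B. Good t m B)" for t m
  have BG: "Good t m (B t m)" if "m \<in> {1..M t}" for t m using someI_ex[OF ex[OF that]] unfolding B_def by simp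
  define A where "A t = (\<Union>m\<in>{1..M t}. B t m)" for t
  have As: "A t \<in> sets \<mu>" for t unfolding A_def using BG unfolding Good_def by (intro sets.finite_UN) auto
  have Ap: "prob (A t) \<le> K * dlt t" for t
  proof -
    have "prob (A t) \<le> (\<Sum>m\<in>{1..M t}. prob (B t m))" unfolding A_def using BG unfolding Good_def
      by (intro measure_UNION_le) auto
    also have "\<dots> \<le> (\<Sum>m\<in>{1..M t}. 3 * real (n t) * 2 ^ (ell t * n t) * (K / (real (\<kappa> t) * (\<eta> t)\<^sup>2)))"
      using BG unfolding Good_def by (intro sum_mono) auto
    also have "\<dots> = real (M t) * (3 * real (n t) * X t * (K / (real (\<kappa> t) * (eps t / (3 * real (M t) * X t))\<^sup>2)))"
      unfolding X_def \<eta>_def by simp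
    also have "\<dots> \<le> K * dlt t"
    proof (rule gen_bound)
      have "real (\<kappa> t) \<ge> Ctil (M t) (ell t) (n t) / ((eps t)\<^sup>2 * dlt t)"
        unfolding \<kappa>_def by (rule tau_ge(1)[OF Cpos dpos])
      then show "real (M t) * 2 ^ E t / ((eps t)\<^sup>2 * dlt t) \<le> real (\<kappa> t)" unfolding Ct .
      have x1: "1 \<le> n t * ell t" using lp[of t] np[of t] by (simp add: Suc_le_eq)
      have nx: "n t \<le> 2 ^ (n t * ell t)"
      proof -
        have "n t < 2 ^ n t" by (rule less_exp)
        also have "(2::nat) ^ n t \<le> 2 ^ (n t * ell t)" using lp[of t] by (intro power_increasing) auto
        finally show ?thesis by simp
      qed
      have Mx: "M t \<le> 2 ^ (n t * ell t)" using nx nMp[of t] by linarith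
      have y1: "1 \<le> M t * ell t" using Mp[of t] lp[of t] by (simp add: Suc_le_eq)
      have "27 * n t * M t ^ 2 * 2 ^ (3 * (n t * ell t)) \<le> (2::nat) ^ (2 ^ (2 * (n t * ell t) + 1) + 2 ^ (M t * ell t + 1) + 2)"
        by (rule nat_bound[OF x1 nx Mx y1])
      then have "real (27 * n t * M t ^ 2 * 2 ^ (3 * (n t * ell t))) \<le> real ((2::nat) ^ E t)"
        unfolding E_def by (simp only: of_nat_le_iff mult.assoc)
      moreover have "X t ^ 3 = 2 ^ (3 * (n t * ell t))" unfolding X_def by (simp add: power_mult[symmetric] mult.commute)
      ultimately show "27 * real (n t) * (real (M t))\<^sup>2 * X t ^ 3 \<le> 2 ^ E t" by simp
      show "1 \<le> real (M t)" using Mp[of t] by simp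
    qed (use epsp dltp K0 Xpos in auto)
    finally show ?thesis .
  qed
  have summA: "summable (\<lambda>t. prob (A t))"
    by (rule summable_comparison_test[of _ "\<lambda>t. K * dlt t"]) (use Ap in \<open>auto intro: summable_mult dlt_sum\<close>)
  have AE1: "AE \<omega> in \<mu>. eventually (\<lambda>t. \<omega> \<in> space \<mu> - A t) sequentially"
    by (rule borel_cantelli_AE1[OF As _ summA]) (simp add: emeasure_eq_measure)
  have dl: "(\<lambda>t. \<Sum>m=1..M t. disc (ell t) (n t) m) \<longlonglongrightarrow> (\<Sum>m. beta_coef \<mu> (Suc m))"
    by (rule sum_disc_lim[OF summ l_mono l_unb n_mono n_unb M_inc nMp])
  show ?thesis
  proof (rule AE_mp[OF AE1], intro AE_I2 impI)
    fix \<omega> assume w: "\<omega> \<in> space \<mu>" and ev: "eventually (\<lambda>t. \<omega> \<in> space \<mu> - A t) sequentially"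
    have ev2: "eventually (\<lambda>t. norm ((\<Sum>m=1..M t. beta_hat (ell t) (\<kappa> t) (n t) \<omega> m) - (\<Sum>m=1..M t. disc (ell t) (n t) m)) \<le> eps t / 2) sequentially"
      using ev
    proof eventually_elim
      case (elim t)
      have pt: "\<bar>beta_hat (ell t) (\<kappa> t) (n t) \<omega> m - disc (ell t) (n t) m\<bar> \<le> eps t / (2 * real (M t))" if "m \<in> {1..M t}" for m
      proof -
        have "\<omega> \<notin> B t m" using elim that unfolding A_def by auto
        then have "\<bar>beta_hat (ell t) (\<kappa> t) (n t) \<omega> m - disc (ell t) (n t) m\<bar> \<le> 3 / 2 * \<eta> t * 2 ^ (ell t * n t)"
          using BG[OF that] w unfolding Good_def by blast
        also have "\<dots> = eps t / (2 * real (M t))" unfolding \<eta>_def X_def using Mp[of t] by (simp add: field_simps)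
        finally show ?thesis .
      qed
      have "norm ((\<Sum>m=1..M t. beta_hat (ell t) (\<kappa> t) (n t) \<omega> m) - (\<Sum>m=1..M t. disc (ell t) (n t) m))
          = \<bar>\<Sum>m=1..M t. beta_hat (ell t) (\<kappa> t) (n t) \<omega> m - disc (ell t) (n t) m\<bar>"
        by (simp add: sum_subtractf)
      also have "\<dots> \<le> (\<Sum>m=1..M t. \<bar>beta_hat (ell t) (\<kappa> t) (n t) \<omega> m - disc (ell t) (n t) m\<bar>)" by (rule sum_abs)
      also have "\<dots> \<le> (\<Sum>m=1..M t. eps t / (2 * real (M t)))" using pt by (intro sum_mono) auto
      also have "\<dots> = eps t / 2" using Mp[of t] by simp
      finally show ?case .
    qed
    have "(\<lambda>t. eps t / 2) \<longlonglongrightarrow> 0" using tendsto_divide[OF eps_lim tendsto_const, of 2] by simp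
    then have z: "(\<lambda>t. (\<Sum>m=1..M t. beta_hat (ell t) (\<kappa> t) (n t) \<omega> m) - (\<Sum>m=1..M t. disc (ell t) (n t) m)) \<longlonglongrightarrow> 0"
      by (rule Lim_null_comparison[OF ev2])
    have "(\<lambda>t. ((\<Sum>m=1..M t. beta_hat (ell t) (\<kappa> t) (n t) \<omega> m) - (\<Sum>m=1..M t. disc (ell t) (n t) m)) + (\<Sum>m=1..M t. disc (ell t) (n t) m))
       \<longlonglongrightarrow> 0 + (\<Sum>m. beta_coef \<mu> (Suc m))"
      by (rule tendsto_add[OF z dl])
    then show "(\<lambda>t. \<Sum>m=1..M t. beta_hat (ell t) (nat \<lceil>Ctil (M t) (ell t) (n t) / ((eps t)\<^sup>2 * dlt t)\<rceil>) (n t) \<omega> m)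
        \<longlonglongrightarrow> (\<Sum>m. beta_coef \<mu> (Suc m))"
      unfolding \<kappa>_def by simp
  qed
qed

end

theorem theorem5:
  fixes \<mu> :: "(nat \<Rightarrow> real) measure"
    and ell n M :: "nat \<Rightarrow> nat" and dlt eps :: "nat \<Rightarrow> real"
  assumes prob: "prob_space \<mu>"
    and sets_mu: "sets \<mu> = sets seq_space"
    and stationary: "distr \<mu> \<mu> (\<lambda>\<omega> t. \<omega> (Suc t)) = \<mu>"
    and mixing: "(\<lambda>m. beta_coef \<mu> m) \<longlonglongrightarrow> 0"
    and finite_norm: "summable (\<lambda>m. beta_coef \<mu> (Suc m))"
    and l_pos: "\<forall>t. ell t > 0" and l_mono: "mono ell" and l_unb: "\<not> bdd_above (range ell)"
    and n_pos: "\<forall>t. n t > 0" and n_mono: "mono n" and n_unb: "\<not> bdd_above (range n)"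
    and M_pos: "\<forall>t. M t > 0" and M_inc: "strict_mono M" and nM: "\<forall>t. n t > M t"
    and dlt_pos: "\<forall>t. dlt t > 0" and dlt_sum: "summable dlt"
    and eps_pos: "\<forall>t. eps t > 0" and eps_lim: "eps \<longlonglongrightarrow> 0"
  shows "(\<forall>m::nat. m \<ge> 1 \<longrightarrow>
           (AE \<omega> in \<mu>.
              (\<lambda>t. beta_hat (ell t)
                      (nat \<lceil>Ctil m (ell t) (n t) / (real m * (eps t)\<^sup>2 * dlt t)\<rceil>)
                      (n t) \<omega> m)
              \<longlonglongrightarrow> beta_coef \<mu> m))
       \<and> (AE \<omega> in \<mu>.
            (\<lambda>t. \<Sum>m=1..M t. beta_hat (ell t)
                      (nat \<lceil>Ctil (M t) (ell t) (n t) / ((eps t)\<^sup>2 * dlt t)\<rceil>)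
                      (n t) \<omega> m)
            \<longlonglongrightarrow> (\<Sum>m. beta_coef \<mu> (Suc m)))"
proof -
  interpret stat \<mu> by (rule stat.intro[OF prob sets_mu stationary])
  show ?thesis
    using part1[OF finite_norm l_pos l_mono l_unb n_pos n_mono n_unb dlt_pos dlt_sum eps_pos eps_lim]
      part2[OF finite_norm l_pos l_mono l_unb n_pos n_mono n_unb M_pos M_inc nM dlt_pos dlt_sum eps_pos eps_lim]
    by blast
qed


end
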